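(* Let $\alpha\in[1/2,1]$, $\rho_{AB}\in\mathcal{D}(AB)$ with $A,B$ finite-dimensional, $d_A=\dim A$, and $\sigma^{(\alpha)}_B=\frac{(\operatorname{tr}_A\rho_{AB}^\alpha)^{1/\alpha}}{Z}$ with $Z=\operatorname{tr}\big[(\operatorname{tr}_A\rho_{AB}^\alpha)^{1/\alpha}\big]$. Then $$D_{\mathbb{P},3/2}(\rho_{AB}\|I_A\otimes\sigma^{(\alpha)}_B)\le4\log d_A.$$
   Context: $\mathcal{D}(X)$ is the set of density operators on $\mathcal{H}_X$. Petz Rényi divergence: $D_{\mathbb{P},\alpha}(\rho\|\sigma)=\frac1{\alpha-1}\log\operatorname{tr}[\rho^\alpha\sigma^{1-\alpha}]$ if $\operatorname{supp}\rho\subseteq\operatorname{supp}\sigma$ and $+\infty$ otherwise (for $\alpha=3/2$, $\sigma^{-1/2}$ is taken on the support of $\sigma$). *)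

theory Defs
  imports "Jordan_Normal_Form.Matrix" "HOL-Library.Extended_Real"
begin

text \<open>Finite-dimensional operators are represented as complex square matrices.
  The composite system AB of dimensions dA, dB uses the index i * dB + j
  for the basis vector e_i (x) e_j (i < dA, j < dB).\<close>

definition adj :: "complex mat \<Rightarrow> complex mat" where
  "adj A = mat (dim_col A) (dim_row A) (\<lambda>(i,j). cnj (A $$ (j,i)))"

definition unitary_mat :: "nat \<Rightarrow> complex mat \<Rightarrow> bool" where
  "unitary_mat n U \<longleftrightarrow> U \<in> carrier_mat n n \<and> U * adj U = 1\<^sub>m n \<and> adj U * U = 1\<^sub>m n"

definition diag_real :: "real list \<Rightarrow> complex mat" where
  "diag_real ls = mat (length ls) (length ls)
     (\<lambda>(i,j). if i = j then complex_of_real (ls ! i) else 0)"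

definition mtrace :: "complex mat \<Rightarrow> complex" where
  "mtrace A = (\<Sum>i<dim_row A. A $$ (i,i))"

definition psd :: "nat \<Rightarrow> complex mat \<Rightarrow> bool" where
  "psd n A \<longleftrightarrow> A \<in> carrier_mat n n \<and> adj A = A \<and>
     (\<forall>v \<in> carrier_vec n. 0 \<le> Re (conjugate v \<bullet> (A *\<^sub>v v)))"

definition density :: "nat \<Rightarrow> complex mat \<Rightarrow> bool" where
  "density n \<rho> \<longleftrightarrow> psd n \<rho> \<and> mtrace \<rho> = 1"

definition mat_fun :: "nat \<Rightarrow> (real \<Rightarrow> real) \<Rightarrow> complex mat \<Rightarrow> complex mat" where
  "mat_fun n f A = (SOME B. \<exists>U ls. unitary_mat n U \<and> length ls = n \<and>
       A = U * diag_real ls * adj U \<and> B = U * diag_real (map f ls) * adj U)"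

text \<open>Real powers of PSD matrices; since 0 powr p = 0, negative powers are
  automatically taken on the support.\<close>
definition mat_powr :: "nat \<Rightarrow> complex mat \<Rightarrow> real \<Rightarrow> complex mat" where
  "mat_powr n A p = mat_fun n (\<lambda>x. x powr p) A"

definition supp :: "nat \<Rightarrow> complex mat \<Rightarrow> complex vec set" where
  "supp n A = {A *\<^sub>v v | v. v \<in> carrier_vec n}"

definition petz_renyi :: "nat \<Rightarrow> real \<Rightarrow> complex mat \<Rightarrow> complex mat \<Rightarrow> ereal" where
  "petz_renyi n a \<rho> \<sigma> =
     (if supp n \<rho> \<subseteq> supp n \<sigma>
      then ereal (1 / (a - 1) * ln (Re (mtrace (mat_powr n \<rho> a * mat_powr n \<sigma> (1 - a)))))
      else \<infinity>)"

definition ptrace_A :: "nat \<Rightarrow> nat \<Rightarrow> complex mat \<Rightarrow> complex mat" where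
  "ptrace_A dA dB X = mat dB dB (\<lambda>(j,j'). \<Sum>i<dA. X $$ (i * dB + j, i * dB + j'))"

definition id_tensor :: "nat \<Rightarrow> nat \<Rightarrow> complex mat \<Rightarrow> complex mat" where
  "id_tensor dA dB X = mat (dA * dB) (dA * dB)
     (\<lambda>(k,l). if k div dB = l div dB then X $$ (k mod dB, l mod dB) else 0)"

end

theory Submission
  imports Defs "Jordan_Normal_Form.Schur_Decomposition"
begin

lemma sum_block_split:
  fixes g :: "nat \<Rightarrow> 'a::comm_monoid_add"
  shows "(\<Sum>m<dA*dB. g m) = (\<Sum>a<dA. \<Sum>j<dB. g (a*dB+j))"
proof (induct dA)
  case 0 then show ?case by simp
next
  case (Suc a)
  have "(\<Sum>m<Suc a*dB. g m) = (\<Sum>m<a*dB. g m) + (\<Sum>m\<in>{a*dB..<a*dB+dB}. g m)"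
    by (simp add: lessThan_atLeast0 sum.atLeastLessThan_concat add.commute)
  also have "(\<Sum>m\<in>{a*dB..<a*dB+dB}. g m) = (\<Sum>j<dB. g (a*dB+j))"
  proof -
    have "(\<Sum>m\<in>{a*dB..<a*dB+dB}. g m) = (\<Sum>j\<in>{0..<dB}. g (j + a*dB))"
      using sum.shift_bounds_nat_ivl[of g 0 "a*dB" dB] by (simp add: add.commute)
    then show ?thesis by (simp add: lessThan_atLeast0 add.commute)
  qed
  finally show ?case using Suc by simp
qed

lemma mult_idx:
  assumes "A \<in> carrier_mat n m" "B \<in> carrier_mat m p" "i < n" "j < p"
  shows "(A * B) $$ (i,j) = (\<Sum>k<m. A $$ (i,k) * B $$ (k,j))"
  using assms by (auto simp: scalar_prod_def lessThan_atLeast0 intro!: sum.cong)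

lemma adj_carrier[simp]: "A \<in> carrier_mat n m \<Longrightarrow> adj A \<in> carrier_mat m n"
  by (auto simp: adj_def)

lemma adj_dims[simp]: "dim_row (adj A) = dim_col A" "dim_col (adj A) = dim_row A"
  by (auto simp: adj_def)

lemma adj_idx[simp]: "i < dim_col A \<Longrightarrow> j < dim_row A \<Longrightarrow> adj A $$ (i,j) = cnj (A $$ (j,i))"
  by (auto simp: adj_def)

lemma diag_carrier[simp]: "diag_real ls \<in> carrier_mat (length ls) (length ls)"
  by (auto simp: diag_real_def)

lemma diag_dims[simp]: "dim_row (diag_real ls) = length ls" "dim_col (diag_real ls) = length ls"
  by (auto simp: diag_real_def)

lemma diag_idx[simp]: "i < length ls \<Longrightarrow> j < length ls \<Longrightarrow>
   diag_real ls $$ (i,j) = (if i = j then complex_of_real (ls ! i) else 0)"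
  by (auto simp: diag_real_def)

lemma adj_adj[simp]: "adj (adj A) = A"
  by (auto simp: adj_def)

lemma adj_mult: assumes A: "A \<in> carrier_mat n m" and B: "B \<in> carrier_mat m p"
  shows "adj (A * B) = adj B * adj A"
proof (rule eq_matI)
  fix i j assume "i < dim_row (adj B * adj A)" "j < dim_col (adj B * adj A)"
  then have i: "i < p" and j: "j < n" using A B by auto
  have "adj (A * B) $$ (i, j) = cnj ((A * B) $$ (j,i))" using i j A B by simp
  also have "\<dots> = cnj (\<Sum>k<m. A $$ (j,k) * B $$ (k,i))" using i j A B by (simp only: mult_idx)
  also have "\<dots> = (\<Sum>k<m. adj B $$ (i,k) * adj A $$ (k,j))" using i j A B
    by (simp add: mult.commute)
  also have "\<dots> = (adj B * adj A) $$ (i, j)" using i j A B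
    by (intro mult_idx[symmetric]) auto
  finally show "adj (A * B) $$ (i, j) = (adj B * adj A) $$ (i, j)" .
qed (use A B in auto)

definition sd :: "complex mat \<Rightarrow> real list \<Rightarrow> complex mat" where
  "sd U d = U * diag_real d * adj U"

lemma sd_carrier[simp]: "U \<in> carrier_mat n n \<Longrightarrow> length d = n \<Longrightarrow> sd U d \<in> carrier_mat n n"
  by (auto simp: sd_def)

lemma sd_idx: assumes U: "U \<in> carrier_mat n n" and d: "length d = n" and i: "i < n" and j: "j < n"
  shows "sd U d $$ (i,j) = (\<Sum>k<n. U $$ (i,k) * complex_of_real (d ! k) * cnj (U $$ (j,k)))"
proof -
  have UD: "U * diag_real d \<in> carrier_mat n n" using U d by auto
  have e: "(U * diag_real d) $$ (i,k) = U $$ (i,k) * complex_of_real (d ! k)" if "k < n" for k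
  proof -
    have "(U * diag_real d) $$ (i,k) = (\<Sum>l<n. U $$ (i,l) * diag_real d $$ (l,k))"
      using U d i that by (intro mult_idx) auto
    also have "\<dots> = (\<Sum>l<n. if l = k then U $$ (i,k) * complex_of_real (d ! k) else 0)"
      using d that by (intro sum.cong) auto
    finally show ?thesis using that by simp
  qed
  have "sd U d $$ (i,j) = (\<Sum>k<n. (U * diag_real d) $$ (i,k) * adj U $$ (k,j))"
    unfolding sd_def using U d i j UD by (intro mult_idx) auto
  also have "\<dots> = (\<Sum>k<n. U $$ (i,k) * complex_of_real (d ! k) * cnj (U $$ (j,k)))"
    using U j by (intro sum.cong) (auto simp: e)
  finally show ?thesis .
qed

lemma unitary_carrier: "unitary_mat n U \<Longrightarrow> U \<in> carrier_mat n n"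
  by (simp add: unitary_mat_def)

lemma unitary_col: assumes "unitary_mat n U" "i < n" "j < n"
  shows "(\<Sum>k<n. cnj (U $$ (k,i)) * U $$ (k,j)) = (if i = j then 1 else 0)"
proof -
  have U: "U \<in> carrier_mat n n" and e: "adj U * U = 1\<^sub>m n" using assms unfolding unitary_mat_def by auto
  have "(adj U * U) $$ (i,j) = (\<Sum>k<n. adj U $$ (i,k) * U $$ (k,j))"
    using U assms by (intro mult_idx) auto
  also have "\<dots> = (\<Sum>k<n. cnj (U $$ (k,i)) * U $$ (k,j))" using U assms by simp
  finally show ?thesis using e assms by simp
qed

lemma unitary_row: assumes "unitary_mat n U" "i < n" "j < n"
  shows "(\<Sum>k<n. U $$ (i,k) * cnj (U $$ (j,k))) = (if i = j then 1 else 0)"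
proof -
  have U: "U \<in> carrier_mat n n" and e: "U * adj U = 1\<^sub>m n" using assms unfolding unitary_mat_def by auto
  have "(U * adj U) $$ (i,j) = (\<Sum>k<n. U $$ (i,k) * adj U $$ (k,j))"
    using U assms by (intro mult_idx) auto
  also have "\<dots> = (\<Sum>k<n. U $$ (i,k) * cnj (U $$ (j,k)))" using U assms by simp
  finally show ?thesis using e assms by simp
qed

lemma sq_assoc: "A \<in> carrier_mat n n \<Longrightarrow> B \<in> carrier_mat n n \<Longrightarrow> C \<in> carrier_mat n n \<Longrightarrow>
  A * B * C = A * (B * C)"
  by (rule assoc_mult_mat)

lemma unitary_mult: assumes "unitary_mat n U" "unitary_mat n V" shows "unitary_mat n (U * V)"
proof -
  have U: "U \<in> carrier_mat n n" "U * adj U = 1\<^sub>m n" "adj U * U = 1\<^sub>m n"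
   and V: "V \<in> carrier_mat n n" "V * adj V = 1\<^sub>m n" "adj V * V = 1\<^sub>m n"
    using assms unfolding unitary_mat_def by auto
  have aU: "adj U \<in> carrier_mat n n" and aV: "adj V \<in> carrier_mat n n" using U V by auto
  have a: "adj (U * V) = adj V * adj U" using U V by (simp add: adj_mult)
  have "U * V * (adj V * adj U) = U * (V * (adj V * adj U))"
    using sq_assoc[OF U(1) V(1)] aU aV by simp
  also have "V * (adj V * adj U) = (V * adj V) * adj U"
    using sq_assoc[OF V(1) aV aU] by simp
  finally have 1: "U * V * adj (U * V) = 1\<^sub>m n" using a U V aU by simp
  have "adj V * adj U * (U * V) = adj V * (adj U * (U * V))"
    using sq_assoc[OF aV aU] U V by simp
  also have "adj U * (U * V) = (adj U * U) * V"
    using sq_assoc[OF aU U(1) V(1)] by simp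
  finally have 2: "adj (U * V) * (U * V) = 1\<^sub>m n" using a U V aV by simp
  show ?thesis using 1 2 U V unfolding unitary_mat_def by auto
qed

definition nsq :: "nat \<Rightarrow> complex vec \<Rightarrow> real" where
  "nsq n w = (\<Sum>i<n. (cmod (w $ i))\<^sup>2)"

lemma cscalar_nsq: assumes "w \<in> carrier_vec n" shows "w \<bullet>c w = complex_of_real (nsq n w)"
proof -
  have "w \<bullet>c w = (\<Sum>i\<in>{0..<n}. w $ i * cnj (w $ i))" using assms by (simp add: scalar_prod_def)
  also have "\<dots> = (\<Sum>i<n. complex_of_real ((cmod (w $ i))\<^sup>2))"
    by (simp only: lessThan_atLeast0 complex_norm_square)
  finally show ?thesis by (simp add: nsq_def)
qed

lemma nsq_nonneg: "nsq n w \<ge> 0" by (simp add: nsq_def sum_nonneg)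

lemma unit_first_basis:
  fixes v0 :: "complex vec"
  assumes v0: "v0 \<in> carrier_vec n" "v0 \<noteq> 0\<^sub>v n" and n: "n > 0"
  shows "\<exists>W. unitary_mat n W \<and> (\<exists>c. \<forall>k<n. W $$ (k,0) = c * v0 $ k)"
proof -
  interpret cof_vec_space n "TYPE(complex)" .
  define b where "b = basis_completion v0"
  from basis_completion[OF v0, folded b_def]
  have dist_b: "distinct b" and indep: "\<not> lin_dep (set b)" and bc: "set b \<subseteq> carrier_vec n"
    and hdb: "hd b = v0" and len_b: "length b = n" by auto
  from hdb len_b n obtain vs where bv: "b = v0 # vs" by (cases b, auto)
  define ws where "ws = gram_schmidt n b"
  from gram_schmidt_result[OF bc dist_b indep ws_def]
  have ws: "set ws \<subseteq> carrier_vec n" "corthogonal ws" "length ws = n"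
    by (auto simp: len_b)
  from gram_schmidt_hd[OF v0(1), of vs, folded bv] have hdws: "hd ws = v0" unfolding ws_def .
  have ws0: "ws ! 0 = v0" using hdws ws(3) n by (cases ws) auto
  have wsc: "ws ! j \<in> carrier_vec n" if "j < n" for j using ws that by auto
  have pos: "nsq n (ws ! j) > 0" if "j < n" for j
  proof -
    have "ws ! j \<bullet>c ws ! j \<noteq> 0" using corthogonalD[OF ws(2), of j j] ws(3) that by auto
    then have "nsq n (ws ! j) \<noteq> 0" using cscalar_nsq[OF wsc[OF that]] by auto
    then show ?thesis using nsq_nonneg[of n "ws ! j"] by linarith
  qed
  define s where "s j = complex_of_real (sqrt (nsq n (ws ! j)))" for j
  have s0: "s j \<noteq> 0" if "j < n" for j using pos[OF that] by (simp add: s_def)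
  have ss: "cnj (s j) * s j = complex_of_real (nsq n (ws ! j))" if "j < n" for j
    using pos[OF that] by (simp add: s_def of_real_mult[symmetric] del: of_real_mult)
  define W where "W = mat n n (\<lambda>(i,j). (ws ! j) $ i / s j)"
  have Wc: "W \<in> carrier_mat n n" by (simp add: W_def)
  have "adj W * W = 1\<^sub>m n"
  proof (rule eq_matI)
    fix i j assume ij: "i < dim_row (1\<^sub>m n)" "j < dim_col (1\<^sub>m n)"
    then have i: "i < n" and j: "j < n" by auto
    have "(adj W * W) $$ (i,j) = (\<Sum>k<n. adj W $$ (i,k) * W $$ (k,j))"
      using Wc i j by (intro mult_idx) auto
    also have "\<dots> = (\<Sum>k<n. (ws ! j) $ k * cnj ((ws ! i) $ k)) / (cnj (s i) * s j)"
      using i j by (simp add: W_def sum_divide_distrib mult.commute)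
    also have "(\<Sum>k<n. (ws ! j) $ k * cnj ((ws ! i) $ k)) = ws ! j \<bullet>c ws ! i"
      using wsc[OF i] by (simp add: scalar_prod_def lessThan_atLeast0)
    finally have e: "(adj W * W) $$ (i,j) = ws ! j \<bullet>c ws ! i / (cnj (s i) * s j)" .
    show "(adj W * W) $$ (i,j) = 1\<^sub>m n $$ (i,j)"
    proof (cases "i = j")
      case True
      then show ?thesis using e ss[OF i] cscalar_nsq[OF wsc[OF i]] pos[OF i] i by simp
    next
      case False
      then show ?thesis using e corthogonalD[OF ws(2), of j i] ws(3) i j by simp
    qed
  qed (use Wc in auto)
  moreover then have "W * adj W = 1\<^sub>m n"
    using mat_mult_left_right_inverse[of "adj W" n W] Wc by auto
  ultimately have "unitary_mat n W" using Wc by (simp add: unitary_mat_def)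
  moreover have "\<forall>k<n. W $$ (k,0) = (1 / s 0) * v0 $ k" using n by (simp add: W_def ws0)
  ultimately show ?thesis by blast
qed


lemma mult_sq_carrier[simp]: "A \<in> carrier_mat n n \<Longrightarrow> B \<in> carrier_mat n n \<Longrightarrow> A * B \<in> carrier_mat n n"
  by (rule mult_carrier_mat)

lemma unitary_adj: "unitary_mat n U \<Longrightarrow> unitary_mat n (adj U)"
  by (auto simp: unitary_mat_def)

lemma sd_unitary_conj:
  assumes U: "unitary_mat n U" and d: "length d = n"
  shows "adj U * sd U d * U = diag_real d"
proof -
  have Uc: "U \<in> carrier_mat n n" and aUc: "adj U \<in> carrier_mat n n" and Dc: "diag_real d \<in> carrier_mat n n"
    using U d by (auto simp: unitary_mat_def)
  have 1: "adj U * U = 1\<^sub>m n" "U * adj U = 1\<^sub>m n" using U by (auto simp: unitary_mat_def)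
  have "adj U * sd U d * U = adj U * (U * diag_real d * adj U) * U" by (simp add: sd_def)
  also have "\<dots> = (adj U * U) * diag_real d * (adj U * U)"
    using Uc aUc Dc by (simp add: sq_assoc[of _ n])
  also have "\<dots> = diag_real d" using 1 Dc by (simp add: left_mult_one_mat[OF Dc] right_mult_one_mat[OF Dc])
  finally show ?thesis .
qed

lemma hermitian_decomp:
  assumes "A \<in> carrier_mat n n" "adj A = A"
  shows "\<exists>U ls. unitary_mat n U \<and> length ls = n \<and> A = sd U ls"
  using assms
proof (induct n arbitrary: A)
  case 0
  have "unitary_mat 0 (1\<^sub>m 0)" by (auto simp: unitary_mat_def intro!: eq_matI)
  moreover have "A = sd (1\<^sub>m 0) []" using 0 by (auto simp: sd_def intro!: eq_matI)
  ultimately show ?case by (intro exI[of _ "1\<^sub>m 0"] exI[of _ "[]"]) auto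
next
  case (Suc m A)
  define n where "n = Suc m"
  have A: "A \<in> carrier_mat n n" and hA: "adj A = A" using Suc n_def by auto
  obtain as where cp: "char_poly A = (\<Prod>a\<leftarrow>as. [:- a, 1:])" and las: "length as = n"
    using char_poly_factorized[OF A] by blast
  obtain e rest where as: "as = e # rest" using las n_def by (cases as) auto
  have "poly (char_poly A) e = 0" unfolding cp as by simp
  then have "eigenvalue A e" using eigenvalue_root_char_poly[OF A] by simp
  from find_eigenvector[OF A this] obtain v0 where ev: "eigenvector A v0 e" by blast
  then have v0: "v0 \<in> carrier_vec n" "v0 \<noteq> 0\<^sub>v n" and Av0: "A *\<^sub>v v0 = e \<cdot>\<^sub>v v0"
    using A unfolding eigenvector_def by auto
  obtain W c where W: "unitary_mat n W" and Wcol: "\<And>k. k < n \<Longrightarrow> W $$ (k,0) = c * v0 $ k"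
    using unit_first_basis[OF v0] n_def by auto
  have Wc: "W \<in> carrier_mat n n" and aWc: "adj W \<in> carrier_mat n n" using W by (auto simp: unitary_mat_def)
  define A' where "A' = adj W * A * W"
  have A'c: "A' \<in> carrier_mat n n" using Wc aWc A by (simp add: A'_def)
  have hA': "adj A' = A'"
    unfolding A'_def using Wc aWc A hA
    by (simp add: adj_mult[of _ n n _ n] adj_mult[of _ n n] sq_assoc[of _ n])
  have AW0: "(A * W) $$ (k,0) = e * W $$ (k,0)" if k: "k < n" for k
  proof -
    have "(A * W) $$ (k,0) = (\<Sum>l<n. A $$ (k,l) * W $$ (l,0))" using A Wc k n_def by (intro mult_idx) auto
    also have "\<dots> = c * (\<Sum>l<n. A $$ (k,l) * v0 $ l)" by (simp add: Wcol sum_distrib_left mult_ac)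
    also have "(\<Sum>l<n. A $$ (k,l) * v0 $ l) = (A *\<^sub>v v0) $ k"
      using A v0 k by (simp add: scalar_prod_def lessThan_atLeast0)
    also have "\<dots> = e * v0 $ k" using Av0 k v0 by simp
    finally show ?thesis using Wcol[OF k] by simp
  qed
  have A'0: "A' $$ (i,0) = (if i = 0 then e else 0)" if i: "i < n" for i
  proof -
    have "A' = adj W * (A * W)" unfolding A'_def using Wc aWc A by (simp add: sq_assoc[of _ n])
    moreover have "(adj W * (A * W)) $$ (i,0) = (\<Sum>k<n. adj W $$ (i,k) * (A * W) $$ (k,0))"
      by (rule mult_idx[of _ n n]) (use Wc aWc A i n_def in auto)
    ultimately have "A' $$ (i,0) = (\<Sum>k<n. adj W $$ (i,k) * (A * W) $$ (k,0))" by (simp only:)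
    also have "\<dots> = e * (\<Sum>k<n. cnj (W $$ (k,i)) * W $$ (k,0))"
      using Wc i by (simp add: AW0 sum_distrib_left mult.commute mult.left_commute)
    also have "\<dots> = (if i = 0 then e else 0)" using unitary_col[OF W i, of 0] n_def by simp
    finally show ?thesis .
  qed
  have A'00: "A' $$ (0,0) = e" using A'0[of 0] n_def by simp
  have "cnj (A' $$ (0,0)) = A' $$ (0,0)"
    using arg_cong[OF hA', of "\<lambda>M. M $$ (0,0)"] A'c n_def by simp
  then have ereal: "e = complex_of_real (Re e)" using A'00 by (metis Reals_cnj_iff complex_is_Real_iff of_real_Re)
  have A'0j: "A' $$ (0,j) = (if j = 0 then e else 0)" if j: "j < n" for j
  proof -
    have "A' $$ (0,j) = cnj (A' $$ (j,0))"
      using arg_cong[OF hA', of "\<lambda>M. M $$ (0,j)"] A'c n_def j by simp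
    then show ?thesis using A'0[OF j] ereal by (auto simp: A'00)
  qed
  define A3 where "A3 = mat m m (\<lambda>(i,j). A' $$ (Suc i, Suc j))"
  have A3c: "A3 \<in> carrier_mat m m" by (simp add: A3_def)
  have hA3: "adj A3 = A3"
  proof (rule eq_matI)
    fix i j assume "i < dim_row A3" "j < dim_col A3"
    then have i: "i < m" and j: "j < m" using A3c by auto
    have "cnj (A' $$ (Suc j, Suc i)) = A' $$ (Suc i, Suc j)"
      using arg_cong[OF hA', of "\<lambda>M. M $$ (Suc i, Suc j)"] A'c n_def i j by simp
    then show "adj A3 $$ (i, j) = A3 $$ (i, j)" using i j by (simp add: A3_def)
  qed (use A3c in auto)
  from Suc(1)[OF A3c hA3] obtain U3 ls3 where U3: "unitary_mat m U3" and ls3: "length ls3 = m"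
    and A3d: "A3 = sd U3 ls3" by blast
  have U3c: "U3 \<in> carrier_mat m m" using U3 by (simp add: unitary_mat_def)
  define U1 where "U1 = mat n n (\<lambda>(i,j). if i = 0 \<and> j = 0 then 1 else if i = 0 \<or> j = 0 then 0
      else U3 $$ (i - 1, j - 1))"
  have U1c: "U1 \<in> carrier_mat n n" by (simp add: U1_def)
  have U1s: "U1 $$ (0,0) = 1" "\<And>j. j < m \<Longrightarrow> U1 $$ (0, Suc j) = 0" "\<And>j. j < m \<Longrightarrow> U1 $$ (Suc j, 0) = 0"
     "\<And>i j. i < m \<Longrightarrow> j < m \<Longrightarrow> U1 $$ (Suc i, Suc j) = U3 $$ (i, j)"
    by (auto simp: U1_def n_def)
  have U1u: "unitary_mat n U1"
  proof -
    have r: "U1 * adj U1 = 1\<^sub>m n"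
    proof (rule eq_matI)
      fix i j assume "i < dim_row (1\<^sub>m n)" "j < dim_col (1\<^sub>m n)"
      then have i: "i < n" and j: "j < n" by auto
      have "(U1 * adj U1) $$ (i,j) = (\<Sum>k<n. U1 $$ (i,k) * cnj (U1 $$ (j,k)))"
        using U1c i j by (subst mult_idx[of _ n n]) auto
      also have "\<dots> = U1 $$ (i,0) * cnj (U1 $$ (j,0)) + (\<Sum>k<m. U1 $$ (i,Suc k) * cnj (U1 $$ (j,Suc k)))"
        unfolding n_def by (subst sum.lessThan_Suc_shift) simp
      also have "\<dots> = 1\<^sub>m n $$ (i,j)"
      proof (cases i)
        case 0
        then show ?thesis using j U1s by (cases j) (auto simp: n_def)
      next
        case (Suc i')
        then have i': "i' < m" using i n_def by simp
        show ?thesis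
        proof (cases j)
          case 0
          then show ?thesis using Suc i' U1s by (auto simp: n_def)
        next
          case (Suc j')
          then have j': "j' < m" using j n_def by simp
          have "(\<Sum>k<m. U1 $$ (i,Suc k) * cnj (U1 $$ (j,Suc k))) = (\<Sum>k<m. U3 $$ (i',k) * cnj (U3 $$ (j',k)))"
            using \<open>i = Suc i'\<close> Suc i' j' U1s by (intro sum.cong) auto
          then show ?thesis using unitary_row[OF U3 i' j'] \<open>i = Suc i'\<close> Suc i' j' U1s i j by auto
        qed
      qed
      finally show "(U1 * adj U1) $$ (i,j) = 1\<^sub>m n $$ (i,j)" .
    qed (use U1c in auto)
    then have "adj U1 * U1 = 1\<^sub>m n" using mat_mult_left_right_inverse[of U1 n "adj U1"] U1c by auto
    then show ?thesis using r U1c by (simp add: unitary_mat_def)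
  qed
  define ls where "ls = Re e # ls3"
  have lsl: "length ls = n" using ls3 by (simp add: ls_def n_def)
  have A'd: "A' = sd U1 ls"
  proof (rule eq_matI)
    fix i j assume "i < dim_row (sd U1 ls)" "j < dim_col (sd U1 ls)"
    then have i: "i < n" and j: "j < n" using sd_carrier[OF U1c lsl] by auto
    have "sd U1 ls $$ (i,j) = (\<Sum>k<n. U1 $$ (i,k) * complex_of_real (ls ! k) * cnj (U1 $$ (j,k)))"
      using sd_idx[OF U1c lsl i j] .
    also have "\<dots> = U1 $$ (i,0) * e * cnj (U1 $$ (j,0)) +
        (\<Sum>k<m. U1 $$ (i,Suc k) * complex_of_real (ls3 ! k) * cnj (U1 $$ (j,Suc k)))"
      unfolding n_def by (subst sum.lessThan_Suc_shift) (simp add: ls_def ereal[symmetric])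
    also have "\<dots> = A' $$ (i,j)"
    proof (cases i)
      case 0
      then show ?thesis using j U1s A'0j A'00 by (cases j) (auto simp: n_def)
    next
      case (Suc i')
      then have i': "i' < m" using i n_def by simp
      show ?thesis
      proof (cases j)
        case 0
        then show ?thesis using Suc i' U1s A'0 i by auto
      next
        case (Suc j')
        then have j': "j' < m" using j n_def by simp
        have "(\<Sum>k<m. U1 $$ (i,Suc k) * complex_of_real (ls3 ! k) * cnj (U1 $$ (j,Suc k)))
            = (\<Sum>k<m. U3 $$ (i',k) * complex_of_real (ls3 ! k) * cnj (U3 $$ (j',k)))"
          using \<open>i = Suc i'\<close> Suc i' j' U1s by (intro sum.cong) auto
        also have "\<dots> = A3 $$ (i', j')" using sd_idx[OF U3c ls3 i' j'] A3d by simp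
        also have "\<dots> = A' $$ (i,j)" using \<open>i = Suc i'\<close> Suc i' j' by (simp add: A3_def)
        finally show ?thesis using \<open>i = Suc i'\<close> Suc U1s i' j' by simp
      qed
    qed
    finally show "A' $$ (i,j) = sd U1 ls $$ (i,j)" by simp
  qed (use sd_carrier[OF U1c lsl] A'c in auto)
  have WW: "W * adj W = 1\<^sub>m n" using W by (simp add: unitary_mat_def)
  have "W * A' * adj W = (W * adj W) * A * (W * adj W)"
    unfolding A'_def using Wc aWc A by (simp add: sq_assoc[of _ n])
  then have AA': "A = W * A' * adj W" using WW A by simp
  have aU1c: "adj U1 \<in> carrier_mat n n" using U1c by simp
  have Dc: "diag_real ls \<in> carrier_mat n n" using lsl by auto
  have "sd (W * U1) ls = W * U1 * diag_real ls * (adj U1 * adj W)"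
    unfolding sd_def using Wc U1c by (simp add: adj_mult[of _ n n])
  also have "\<dots> = W * (U1 * diag_real ls * adj U1) * adj W"
    using Wc aWc U1c aU1c Dc by (simp add: sq_assoc[of _ n])
  also have "\<dots> = A" using AA' A'd by (simp add: sd_def)
  finally show ?case using unitary_mult[OF W U1u] lsl n_def by metis
qed

lemma mult_diag_idx: assumes G: "G \<in> carrier_mat n n" and d: "length d = n" and i: "i < n" and j: "j < n"
  shows "(G * diag_real d) $$ (i,j) = G $$ (i,j) * complex_of_real (d ! j)"
proof -
  have "(G * diag_real d) $$ (i,j) = (\<Sum>k<n. G $$ (i,k) * diag_real d $$ (k,j))"
    using G d i j by (intro mult_idx) auto
  also have "\<dots> = (\<Sum>k<n. if k = j then G $$ (i,j) * complex_of_real (d ! j) else 0)"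
    using d j by (intro sum.cong) auto
  finally show ?thesis using j by simp
qed

lemma diag_mult_idx: assumes G: "G \<in> carrier_mat n n" and d: "length d = n" and i: "i < n" and j: "j < n"
  shows "(diag_real d * G) $$ (i,j) = complex_of_real (d ! i) * G $$ (i,j)"
proof -
  have "(diag_real d * G) $$ (i,j) = (\<Sum>k<n. diag_real d $$ (i,k) * G $$ (k,j))"
    using G d i j by (intro mult_idx) auto
  also have "\<dots> = (\<Sum>k<n. if k = i then complex_of_real (d ! i) * G $$ (i,j) else 0)"
    using d i by (intro sum.cong) auto
  finally show ?thesis using i by simp
qed

lemma sd_fun_unique:
  assumes U: "unitary_mat n U" and U': "unitary_mat n U'" and d: "length d = n" and d': "length d' = n"
    and eq: "sd U d = sd U' d'"
  shows "sd U (map f d) = sd U' (map f d')"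
proof -
  have Uc: "U \<in> carrier_mat n n" and U'c: "U' \<in> carrier_mat n n"
    and aUc: "adj U \<in> carrier_mat n n" and aU'c: "adj U' \<in> carrier_mat n n"
    using U U' by (auto simp: unitary_mat_def)
  have UU: "U * adj U = 1\<^sub>m n" "adj U * U = 1\<^sub>m n" "U' * adj U' = 1\<^sub>m n" "adj U' * U' = 1\<^sub>m n"
    using U U' by (auto simp: unitary_mat_def)
  define G where "G = adj U' * U"
  have Gc: "G \<in> carrier_mat n n" using aU'c Uc by (simp add: G_def)
  have Dc: "diag_real d \<in> carrier_mat n n" "diag_real d' \<in> carrier_mat n n"
    "diag_real (map f d) \<in> carrier_mat n n" "diag_real (map f d') \<in> carrier_mat n n"
    using d d' by (metis diag_carrier length_map)+
  have "adj U' * sd U d * U = G * diag_real d"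
    unfolding sd_def G_def using Uc aUc aU'c Dc
    by (simp add: sq_assoc[of _ n] UU right_mult_one_mat[of _ n n] left_mult_one_mat[of _ n n]
        flip: sq_assoc[of "adj U" n "U"])
  moreover have "adj U' * sd U' d' * U = diag_real d' * G"
    unfolding sd_def G_def using U'c Uc aUc aU'c Dc
    by (simp add: sq_assoc[of _ n] UU left_mult_one_mat[of _ n n]
        flip: sq_assoc[of "adj U'" n "U'"])
  ultimately have GD: "G * diag_real d = diag_real d' * G" using eq by simp
  have GF: "G * diag_real (map f d) = diag_real (map f d') * G"
  proof (rule eq_matI)
    fix i j assume "i < dim_row (diag_real (map f d') * G)" "j < dim_col (diag_real (map f d') * G)"
    then have i: "i < n" and j: "j < n" using Gc d' by auto
    have "G $$ (i,j) * complex_of_real (d ! j) = complex_of_real (d' ! i) * G $$ (i,j)"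
      using arg_cong[OF GD, of "\<lambda>M. M $$ (i,j)"] mult_diag_idx[OF Gc d i j] diag_mult_idx[OF Gc d' i j]
      by simp
    then have "G $$ (i,j) = 0 \<or> d ! j = d' ! i" by (auto simp: mult.commute)
    then have "G $$ (i,j) * complex_of_real (f (d ! j)) = complex_of_real (f (d' ! i)) * G $$ (i,j)"
      by auto
    then show "(G * diag_real (map f d)) $$ (i,j) = (diag_real (map f d') * G) $$ (i,j)"
      using mult_diag_idx[OF Gc _ i j, of "map f d"] diag_mult_idx[OF Gc _ i j, of "map f d'"] d d' i j
      by simp
  qed (use Gc Dc in auto)
  have UG: "U' * G = U" unfolding G_def using U'c aU'c Uc
    by (simp add: UU flip: sq_assoc[of U' n])
  have GG: "G * adj G = 1\<^sub>m n"
  proof -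
    have "adj G = adj U * U'" unfolding G_def using Uc aU'c by (simp add: adj_mult[of _ n n])
    then have "G * adj G = adj U' * (U * adj U) * U'" unfolding G_def using Uc aU'c aUc U'c
      by (simp add: sq_assoc[of _ n])
    then show ?thesis using UU aU'c by (simp add: right_mult_one_mat[OF aU'c])
  qed
  have aG: "adj U = adj G * adj U'" using UG U'c Gc by (metis adj_mult)
  have aGc: "adj G \<in> carrier_mat n n" using Gc by simp
  have "sd U (map f d) = U' * (G * diag_real (map f d)) * adj G * adj U'"
    unfolding sd_def aG UG[symmetric] using U'c Gc aGc aU'c Dc by (simp add: sq_assoc[of _ n] adj_mult[of U' n n G n])
  also have "\<dots> = U' * diag_real (map f d') * (G * adj G) * adj U'"
    unfolding GF using U'c Gc aGc aU'c Dc by (simp add: sq_assoc[of _ n])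
  also have "\<dots> = sd U' (map f d')" using GG Dc U'c by (simp add: sd_def right_mult_one_mat[of _ n n])
  finally show ?thesis .
qed

lemma mat_fun_sd:
  assumes U: "unitary_mat n U" and d: "length d = n"
  shows "mat_fun n f (sd U d) = sd U (map f d)"
proof -
  let ?P = "\<lambda>B. \<exists>U' ls. unitary_mat n U' \<and> length ls = n \<and> sd U d = U' * diag_real ls * adj U'
      \<and> B = U' * diag_real (map f ls) * adj U'"
  have "?P (sd U (map f d))" using U d by (auto simp: sd_def)
  then have "?P (mat_fun n f (sd U d))" unfolding mat_fun_def by (rule someI)
  then obtain U' ls where U': "unitary_mat n U'" "length ls = n" "sd U d = sd U' ls"
    and B: "mat_fun n f (sd U d) = sd U' (map f ls)" by (auto simp: sd_def)
  show ?thesis using sd_fun_unique[OF U U'(1) d U'(2) U'(3)] B by simp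
qed

lemma mat_powr_sd:
  assumes U: "unitary_mat n U" and d: "length d = n"
  shows "mat_powr n (sd U d) p = sd U (map (\<lambda>x. x powr p) d)"
  unfolding mat_powr_def using mat_fun_sd[OF assms] .

lemma sd_hermitian: assumes U: "U \<in> carrier_mat n n" and d: "length d = n"
  shows "adj (sd U d) = sd U d"
proof (rule eq_matI)
  fix i j assume "i < dim_row (sd U d)" "j < dim_col (sd U d)"
  then have i: "i < n" and j: "j < n" using sd_carrier[OF U d] by auto
  show "adj (sd U d) $$ (i, j) = sd U d $$ (i, j)"
    using i j sd_carrier[OF U d] by (simp add: sd_idx[OF U d] mult_ac)
qed (use sd_carrier[OF U d] in auto)

lemma mtrace_sd: assumes U: "unitary_mat n U" and d: "length d = n"
  shows "mtrace (sd U d) = complex_of_real (\<Sum>k<n. d ! k)"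
proof -
  have Uc: "U \<in> carrier_mat n n" using U by (simp add: unitary_mat_def)
  have "mtrace (sd U d) = (\<Sum>i<n. \<Sum>k<n. U $$ (i,k) * complex_of_real (d ! k) * cnj (U $$ (i,k)))"
    unfolding mtrace_def using sd_carrier[OF Uc d] by (intro sum.cong) (auto simp: sd_idx[OF Uc d])
  also have "\<dots> = (\<Sum>k<n. complex_of_real (d ! k) * (\<Sum>i<n. cnj (U $$ (i,k)) * U $$ (i,k)))"
    by (subst sum.swap) (simp add: sum_distrib_left mult_ac)
  also have "\<dots> = (\<Sum>k<n. complex_of_real (d ! k))" using unitary_col[OF U] by simp
  finally show ?thesis by simp
qed

lemma quad_sd: assumes U: "unitary_mat n U" and d: "length d = n" and m: "m < n"
  shows "conjugate (col U m) \<bullet> (sd U d *\<^sub>v col U m) = complex_of_real (d ! m)"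
proof -
  have Uc: "U \<in> carrier_mat n n" and aUc: "adj U \<in> carrier_mat n n" using U by (auto simp: unitary_mat_def)
  have Sc: "sd U d \<in> carrier_mat n n" using Uc d by simp
  have "conjugate (col U m) \<bullet> (sd U d *\<^sub>v col U m) = (\<Sum>a<n. cnj (U $$ (a,m)) * (\<Sum>b<n. sd U d $$ (a,b) * U $$ (b,m)))"
    using Uc Sc m by (simp add: scalar_prod_def lessThan_atLeast0)
  also have "\<dots> = (\<Sum>a<n. adj U $$ (m,a) * (sd U d * U) $$ (a,m))"
  proof (intro sum.cong refl)
    fix a assume a: "a \<in> {..<n}"
    have "(sd U d * U) $$ (a,m) = (\<Sum>b<n. sd U d $$ (a,b) * U $$ (b,m))"
      by (rule mult_idx) (use Uc Sc a m in auto)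
    then show "cnj (U $$ (a,m)) * (\<Sum>b<n. sd U d $$ (a,b) * U $$ (b,m)) = adj U $$ (m,a) * (sd U d * U) $$ (a,m)"
      using a m Uc by (simp del: index_mult_mat)
  qed
  also have "\<dots> = (adj U * (sd U d * U)) $$ (m,m)"
    using Uc Sc m by (intro mult_idx[symmetric, of _ n n]) auto
  also have "adj U * (sd U d * U) = adj U * sd U d * U" using Uc aUc Sc by (simp add: sq_assoc[of _ n])
  also have "\<dots> = diag_real d" using sd_unitary_conj[OF U d] .
  finally show ?thesis using m d by simp
qed

lemma id_tensor_carrier[simp]: "id_tensor dA dB X \<in> carrier_mat (dA*dB) (dA*dB)"
  by (simp add: id_tensor_def)

lemma id_tensor_idx: "k < dA*dB \<Longrightarrow> l < dA*dB \<Longrightarrow>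
  id_tensor dA dB X $$ (k,l) = (if k div dB = l div dB then X $$ (k mod dB, l mod dB) else 0)"
  by (simp add: id_tensor_def)

lemma blk_div[simp]: "j < (dB::nat) \<Longrightarrow> (a*dB + j) div dB = a" by simp
lemma blk_mod[simp]: "j < (dB::nat) \<Longrightarrow> (a*dB + j) mod dB = j" by simp
lemma blk_lt: "a < dA \<Longrightarrow> j < (dB::nat) \<Longrightarrow> a*dB + j < dA*dB"
proof -
  assume "a < dA" "j < dB"
  then have "a*dB + j < a*dB + dB" by simp
  also have "\<dots> = Suc a * dB" by simp
  also have "\<dots> \<le> dA * dB" using \<open>a < dA\<close> by (intro mult_right_mono) auto
  finally show ?thesis .
qed

lemma sum_block_sel:
  fixes h :: "nat \<Rightarrow> nat \<Rightarrow> 'a::comm_monoid_add"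
  assumes a: "a < dA"
  shows "(\<Sum>l<dA*dB. if l div dB = a then h (l div dB) (l mod dB) else 0) = (\<Sum>s<dB. h a s)"
proof -
  have "(\<Sum>l<dA*dB. if l div dB = a then h (l div dB) (l mod dB) else 0)
      = (\<Sum>a'<dA. \<Sum>s<dB. if a' = a then h a' s else 0)"
    by (subst sum_block_split) (intro sum.cong refl, auto)
  also have "\<dots> = (\<Sum>s<dB. h a s)"
    by (subst sum.swap) (simp add: a)
  finally show ?thesis .
qed

lemma id_tensor_mult:
  assumes A: "A \<in> carrier_mat dB dB" and B: "B \<in> carrier_mat dB dB"
  shows "id_tensor dA dB (A * B) = id_tensor dA dB A * id_tensor dA dB B"
proof (rule eq_matI)
  fix k l assume "k < dim_row (id_tensor dA dB A * id_tensor dA dB B)" "l < dim_col (id_tensor dA dB A * id_tensor dA dB B)"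
  then have k: "k < dA*dB" and l: "l < dA*dB" by (auto simp: id_tensor_def)
  then have dB: "dB > 0" by (cases dB) auto
  have kd: "k div dB < dA" and ld: "l div dB < dA" using k l by (auto simp: less_mult_imp_div_less)
  have "(id_tensor dA dB A * id_tensor dA dB B) $$ (k,l) =
     (\<Sum>m<dA*dB. id_tensor dA dB A $$ (k,m) * id_tensor dA dB B $$ (m,l))"
    using k l by (intro mult_idx) auto
  also have "\<dots> = (\<Sum>m<dA*dB. if m div dB = k div dB then
       (if k div dB = l div dB then A $$ (k mod dB, m mod dB) * B $$ (m mod dB, l mod dB) else 0) else 0)"
    using k l by (intro sum.cong refl) (auto simp: id_tensor_idx)
  also have "\<dots> = (\<Sum>s<dB. if k div dB = l div dB then A $$ (k mod dB, s) * B $$ (s, l mod dB) else 0)"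
    using sum_block_sel[OF kd, of dB "\<lambda>a s. if k div dB = l div dB then A $$ (k mod dB, s) * B $$ (s, l mod dB) else 0"]
    by simp
  also have "\<dots> = id_tensor dA dB (A * B) $$ (k,l)"
  proof -
    have "(A * B) $$ (k mod dB, l mod dB) = (\<Sum>s<dB. A $$ (k mod dB, s) * B $$ (s, l mod dB))"
      by (rule mult_idx) (use A B dB in auto)
    then show ?thesis using k l by (simp add: id_tensor_idx del: index_mult_mat)
  qed
  finally show "id_tensor dA dB (A * B) $$ (k,l) = (id_tensor dA dB A * id_tensor dA dB B) $$ (k,l)" by simp
qed (auto simp: id_tensor_def)

lemma id_tensor_adj: assumes A: "A \<in> carrier_mat dB dB"
  shows "adj (id_tensor dA dB A) = id_tensor dA dB (adj A)"
proof (rule eq_matI)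
  fix k l assume "k < dim_row (id_tensor dA dB (adj A))" "l < dim_col (id_tensor dA dB (adj A))"
  then have k: "k < dA*dB" and l: "l < dA*dB" by (auto simp: id_tensor_def)
  then have dB: "dB > 0" by (cases dB) auto
  have "adj (id_tensor dA dB A) $$ (k,l) = cnj (id_tensor dA dB A $$ (l,k))"
    using k l by (simp add: id_tensor_def)
  then show "adj (id_tensor dA dB A) $$ (k,l) = id_tensor dA dB (adj A) $$ (k,l)"
    using k l A dB by (auto simp: id_tensor_idx)
qed (auto simp: id_tensor_def)

lemma id_tensor_one: "dB > 0 \<Longrightarrow> id_tensor dA dB (1\<^sub>m dB) = 1\<^sub>m (dA*dB)"
proof (rule eq_matI)
  fix k l assume dB: "dB > 0" and "k < dim_row (1\<^sub>m (dA*dB))" "l < dim_col (1\<^sub>m (dA*dB))"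
  then have k: "k < dA*dB" and l: "l < dA*dB" by auto
  have "(k div dB = l div dB \<and> k mod dB = l mod dB) = (k = l)"
    by (metis div_mult_mod_eq)
  then show "id_tensor dA dB (1\<^sub>m dB) $$ (k,l) = 1\<^sub>m (dA*dB) $$ (k,l)"
    using k l dB by (auto simp: id_tensor_idx)
qed (auto simp: id_tensor_def)

definition tlist :: "nat \<Rightarrow> nat \<Rightarrow> real list \<Rightarrow> real list" where
  "tlist dA dB t = map (\<lambda>k. t ! (k mod dB)) [0..<dA*dB]"

lemma tlist_len[simp]: "length (tlist dA dB t) = dA*dB" by (simp add: tlist_def)
lemma tlist_nth[simp]: "k < dA*dB \<Longrightarrow> tlist dA dB t ! k = t ! (k mod dB)" by (simp add: tlist_def)

lemma id_tensor_diag: assumes "length t = dB" "dB > 0"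
  shows "id_tensor dA dB (diag_real t) = diag_real (tlist dA dB t)"
proof (rule eq_matI)
  fix k l assume "k < dim_row (diag_real (tlist dA dB t))" "l < dim_col (diag_real (tlist dA dB t))"
  then have k: "k < dA*dB" and l: "l < dA*dB" by auto
  have "(k div dB = l div dB \<and> k mod dB = l mod dB) = (k = l)"
    by (metis div_mult_mod_eq)
  then show "id_tensor dA dB (diag_real t) $$ (k,l) = diag_real (tlist dA dB t) $$ (k,l)"
    using k l assms by (auto simp: id_tensor_idx)
qed (auto simp: id_tensor_def)

lemma id_tensor_unitary: assumes "unitary_mat dB V" "dB > 0"
  shows "unitary_mat (dA*dB) (id_tensor dA dB V)"
proof -
  have Vc: "V \<in> carrier_mat dB dB" and aVc: "adj V \<in> carrier_mat dB dB"
    and e: "V * adj V = 1\<^sub>m dB" "adj V * V = 1\<^sub>m dB" using assms by (auto simp: unitary_mat_def)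
  show ?thesis unfolding unitary_mat_def
    using id_tensor_mult[OF Vc aVc, of dA, symmetric] id_tensor_mult[OF aVc Vc, of dA, symmetric]
      id_tensor_adj[OF Vc, of dA] e id_tensor_one[OF assms(2), of dA] by simp
qed

lemma id_tensor_sd: assumes V: "unitary_mat dB V" and t: "length t = dB" and dB: "dB > 0"
  shows "id_tensor dA dB (sd V t) = sd (id_tensor dA dB V) (tlist dA dB t)"
proof -
  have Vc: "V \<in> carrier_mat dB dB" and aVc: "adj V \<in> carrier_mat dB dB" using V by (auto simp: unitary_mat_def)
  have Dc: "diag_real t \<in> carrier_mat dB dB" using t by auto
  show ?thesis unfolding sd_def
    using id_tensor_mult[OF mult_carrier_mat[OF Vc Dc] aVc, of dA] id_tensor_mult[OF Vc Dc, of dA]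
      id_tensor_adj[OF Vc, of dA] id_tensor_diag[OF t dB, of dA] by simp
qed

lemma smult_sd: assumes U: "U \<in> carrier_mat n n" and d: "length d = n"
  shows "complex_of_real c \<cdot>\<^sub>m sd U d = sd U (map (\<lambda>y. c * y) d)"
proof (rule eq_matI)
  fix i j assume "i < dim_row (sd U (map (\<lambda>y. c * y) d))" "j < dim_col (sd U (map (\<lambda>y. c * y) d))"
  then have i: "i < n" and j: "j < n" using sd_carrier[OF U, of "map (\<lambda>y. c * y) d"] d by auto
  have "(complex_of_real c \<cdot>\<^sub>m sd U d) $$ (i,j) = complex_of_real c * sd U d $$ (i,j)"
    using i j sd_carrier[OF U d] by simp
  also have "\<dots> = sd U (map (\<lambda>y. c * y) d) $$ (i,j)"
    unfolding sd_idx[OF U d i j] sd_idx[OF U _ i j, of "map (\<lambda>y. c * y) d", simplified, OF d]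
    using d by (simp add: sum_distrib_left mult_ac)
  finally show "(complex_of_real c \<cdot>\<^sub>m sd U d) $$ (i,j) = sd U (map (\<lambda>y. c * y) d) $$ (i,j)" .
qed (use sd_carrier[OF U d] sd_carrier[OF U, of "map (\<lambda>y. c * y) d"] d in auto)

lemma sum_swap4:
  "(\<Sum>m\<in>A. \<Sum>k\<in>B. \<Sum>i\<in>C. \<Sum>l\<in>D. F m k i l) = (\<Sum>i\<in>C. \<Sum>l\<in>D. \<Sum>m\<in>A. \<Sum>k\<in>B. F m k i l)"
proof -
  have "(\<Sum>m\<in>A. \<Sum>k\<in>B. \<Sum>i\<in>C. \<Sum>l\<in>D. F m k i l) = (\<Sum>m\<in>A. \<Sum>i\<in>C. \<Sum>l\<in>D. \<Sum>k\<in>B. F m k i l)"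
  proof (rule sum.cong[OF refl])
    fix m
    have "(\<Sum>k\<in>B. \<Sum>i\<in>C. \<Sum>l\<in>D. F m k i l) = (\<Sum>i\<in>C. \<Sum>k\<in>B. \<Sum>l\<in>D. F m k i l)" by (rule sum.swap)
    also have "\<dots> = (\<Sum>i\<in>C. \<Sum>l\<in>D. \<Sum>k\<in>B. F m k i l)" by (rule sum.cong[OF refl], rule sum.swap)
    finally show "(\<Sum>k\<in>B. \<Sum>i\<in>C. \<Sum>l\<in>D. F m k i l) = (\<Sum>i\<in>C. \<Sum>l\<in>D. \<Sum>k\<in>B. F m k i l)" .
  qed
  also have "\<dots> = (\<Sum>i\<in>C. \<Sum>m\<in>A. \<Sum>l\<in>D. \<Sum>k\<in>B. F m k i l)" by (rule sum.swap)
  also have "\<dots> = (\<Sum>i\<in>C. \<Sum>l\<in>D. \<Sum>m\<in>A. \<Sum>k\<in>B. F m k i l)" by (rule sum.cong[OF refl], rule sum.swap)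
  finally show ?thesis .
qed

lemma mtrace_sd_sd:
  assumes U: "unitary_mat n U" and W: "unitary_mat n W" and a: "length a = n" and b: "length b = n"
  shows "mtrace (sd U a * sd W b) =
    (\<Sum>m<n. \<Sum>k<n. complex_of_real (a ! m * b ! k * (cmod ((adj U * W) $$ (m,k)))\<^sup>2))"
proof -
  have Uc: "U \<in> carrier_mat n n" and Wc: "W \<in> carrier_mat n n" using U W by (auto simp: unitary_mat_def)
  have Pc: "sd U a \<in> carrier_mat n n" and Qc: "sd W b \<in> carrier_mat n n" using Uc Wc a b by auto
  define F where "F m k i l = U $$ (i,m) * complex_of_real (a ! m) * cnj (U $$ (l,m)) *
     (W $$ (l,k) * complex_of_real (b ! k) * cnj (W $$ (i,k)))" for m k i l
  have "mtrace (sd U a * sd W b) = (\<Sum>i<n. \<Sum>l<n. sd U a $$ (i,l) * sd W b $$ (l,i))"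
    unfolding mtrace_def using Pc Qc
  proof (intro sum.cong refl)
    fix i assume "i \<in> {..<n}"
    then have i: "i < n" by simp
    show "(sd U a * sd W b) $$ (i,i) = (\<Sum>l<n. sd U a $$ (i,l) * sd W b $$ (l,i))"
      by (rule mult_idx[OF Pc Qc i i])
  qed (use Pc in simp)
  also have "\<dots> = (\<Sum>i<n. \<Sum>l<n. \<Sum>m<n. \<Sum>k<n. F m k i l)"
    by (intro sum.cong refl) (simp add: sd_idx[OF Uc a] sd_idx[OF Wc b] F_def sum_product)
  also have "\<dots> = (\<Sum>m<n. \<Sum>k<n. \<Sum>i<n. \<Sum>l<n. F m k i l)" by (rule sum_swap4[symmetric])
  also have "\<dots> = (\<Sum>m<n. \<Sum>k<n. complex_of_real (a ! m * b ! k * (cmod ((adj U * W) $$ (m,k)))\<^sup>2))"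
  proof (intro sum.cong refl)
    fix m k assume m: "m \<in> {..<n}" and k: "k \<in> {..<n}"
    have G: "(adj U * W) $$ (m,k) = (\<Sum>l<n. cnj (U $$ (l,m)) * W $$ (l,k))"
      using m k Uc Wc by (subst mult_idx[of _ n n]) auto
    have "complex_of_real ((cmod ((adj U * W) $$ (m,k)))\<^sup>2) = cnj ((adj U * W) $$ (m,k)) * (adj U * W) $$ (m,k)"
      by (subst complex_norm_square) (rule mult.commute)
    also have "\<dots> = (\<Sum>i<n. U $$ (i,m) * cnj (W $$ (i,k))) * (\<Sum>l<n. cnj (U $$ (l,m)) * W $$ (l,k))"
      unfolding G by simp
    finally have e: "complex_of_real ((cmod ((adj U * W) $$ (m,k)))\<^sup>2) =
       (\<Sum>i<n. U $$ (i,m) * cnj (W $$ (i,k))) * (\<Sum>l<n. cnj (U $$ (l,m)) * W $$ (l,k))" .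
    show "(\<Sum>i<n. \<Sum>l<n. F m k i l) = complex_of_real (a ! m * b ! k * (cmod ((adj U * W) $$ (m,k)))\<^sup>2)"
      unfolding of_real_mult e by (simp add: F_def sum_product sum_distrib_left mult_ac) (rule sum.swap)
  qed
  finally show ?thesis .
qed

lemma cmod_sq_c: "(complex_of_real (cmod z))\<^sup>2 = z * cnj z"
  using complex_norm_square[of z] by simp

lemma cnj_sum_prod: "cnj (\<Sum>j\<in>A. f j) * (\<Sum>j\<in>A. f j) = (\<Sum>p\<in>A. \<Sum>q\<in>A. cnj (f p) * f q)"
  by (simp only: cnj_sum sum_product)

locale setting =
  fixes dA dB :: nat and U V :: "complex mat" and mu x :: "real list"
  assumes U: "unitary_mat (dA*dB) U" and mul: "length mu = dA*dB"
    and V: "unitary_mat dB V" and xl: "length x = dB"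
    and X: "ptrace_A dA dB (sd U mu) = sd V x" and dBp: "dB > 0"
begin


lemma dB_pos: "dB > 0" using dBp .

definition Gf where "Gf = adj U * id_tensor dA dB V"

definition g where "g m a p = (\<Sum>s<dB. cnj (U $$ (a*dB+s, m)) * V $$ (s,p))"

lemma Uc: "U \<in> carrier_mat (dA*dB) (dA*dB)" using U by (simp add: unitary_mat_def)
lemma Vc: "V \<in> carrier_mat dB dB" using V by (simp add: unitary_mat_def)

lemma Gf_unitary: "unitary_mat (dA*dB) Gf"
  unfolding Gf_def by (rule unitary_mult[OF unitary_adj[OF U] id_tensor_unitary[OF V dB_pos]])

lemma Gf_blk: assumes m: "m < (dA*dB)" and a: "a < dA" and p: "p < dB"
  shows "Gf $$ (m, a*dB+p) = g m a p"
proof -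
  have ap: "a*dB+p < (dA*dB)" using blk_lt[OF a p] .
  have "Gf $$ (m, a*dB+p) = (\<Sum>l<(dA*dB). adj U $$ (m,l) * id_tensor dA dB V $$ (l, a*dB+p))"
    unfolding Gf_def using Uc m ap by (intro mult_idx) auto
  also have "\<dots> = (\<Sum>l<(dA*dB). if l div dB = a then cnj (U $$ (l, m)) * V $$ (l mod dB, p) else 0)"
  proof (intro sum.cong refl)
    fix l assume l: "l \<in> {..<(dA*dB)}"
    show "adj U $$ (m,l) * id_tensor dA dB V $$ (l, a*dB+p) =
      (if l div dB = a then cnj (U $$ (l, m)) * V $$ (l mod dB, p) else 0)"
      using l m ap p Uc by (simp add: id_tensor_idx)
  qed
  also have "\<dots> = (\<Sum>l<(dA*dB). if l div dB = a then
      (\<lambda>a' s. cnj (U $$ (a'*dB + s, m)) * V $$ (s, p)) (l div dB) (l mod dB) else 0)"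
    by (intro sum.cong refl) (simp only: div_mult_mod_eq)
  also have "\<dots> = g m a p"
    using sum_block_sel[OF a, of dB "\<lambda>a' s. cnj (U $$ (a'*dB + s, m)) * V $$ (s, p)"] by (simp add: g_def)
  finally show ?thesis .
qed

lemma K: assumes p: "p < dB" and q: "q < dB"
  shows "(adj V * ptrace_A dA dB (sd U mu) * V) $$ (p,q) =
    (\<Sum>a<dA. \<Sum>m<(dA*dB). complex_of_real (mu ! m) * (cnj (g m a p) * g m a q))"
proof -
  let ?X = "ptrace_A dA dB (sd U mu)"
  have Xc: "?X \<in> carrier_mat dB dB" by (simp add: ptrace_A_def)
  have aVc: "adj V \<in> carrier_mat dB dB" using Vc by simp
  define F where "F a m r s = cnj (V $$ (r,p)) * (U $$ (a*dB+r, m) * complex_of_real (mu ! m) *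
      cnj (U $$ (a*dB+s, m))) * V $$ (s,q)" for a m r s
  have AX: "(adj V * ?X) $$ (p,s) = (\<Sum>r<dB. cnj (V $$ (r,p)) * ?X $$ (r,s))" if s: "s < dB" for s
    using mult_idx[OF aVc Xc p s] p Vc by simp
  have "(adj V * ?X * V) $$ (p,q) = (\<Sum>s<dB. (adj V * ?X) $$ (p,s) * V $$ (s,q))"
    using aVc Xc Vc p q by (intro mult_idx) auto
  also have "\<dots> = (\<Sum>s<dB. \<Sum>r<dB. \<Sum>a<dA. \<Sum>m<(dA*dB). F a m r s)"
  proof (intro sum.cong refl)
    fix s assume s: "s \<in> {..<dB}"
    have "?X $$ (r,s) = (\<Sum>a<dA. \<Sum>m<(dA*dB). U $$ (a*dB+r, m) * complex_of_real (mu ! m) * cnj (U $$ (a*dB+s, m)))"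
      if r: "r < dB" for r
    proof -
      have "?X $$ (r,s) = (\<Sum>a<dA. sd U mu $$ (a*dB+r, a*dB+s))" using r s by (simp add: ptrace_A_def)
      also have "\<dots> = (\<Sum>a<dA. \<Sum>m<(dA*dB). U $$ (a*dB+r, m) * complex_of_real (mu ! m) * cnj (U $$ (a*dB+s, m)))"
        using r s by (intro sum.cong refl) (simp add: sd_idx[OF Uc mul] blk_lt)
      finally show ?thesis .
    qed
    then show "(adj V * ?X) $$ (p,s) * V $$ (s,q) = (\<Sum>r<dB. \<Sum>a<dA. \<Sum>m<(dA*dB). F a m r s)"
      using AX s by (simp add: F_def sum_distrib_left sum_distrib_right)
  qed
  also have "\<dots> = (\<Sum>a<dA. \<Sum>m<(dA*dB). \<Sum>s<dB. \<Sum>r<dB. F a m r s)" by (rule sum_swap4[symmetric])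
  also have "\<dots> = (\<Sum>a<dA. \<Sum>m<(dA*dB). complex_of_real (mu ! m) * (cnj (g m a p) * g m a q))"
    by (intro sum.cong refl) (simp add: F_def g_def sum_product sum_distrib_left mult_ac, rule sum.swap)
  finally show ?thesis .
qed

lemma Xdiag: "adj V * ptrace_A dA dB (sd U mu) * V = diag_real x"
  using sd_unitary_conj[OF V xl] X by simp

lemma K1: assumes j: "j < dB"
  shows "x ! j = (\<Sum>a<dA. \<Sum>m<dA*dB. mu ! m * (cmod (g m a j))\<^sup>2)"
proof -
  have "complex_of_real (x ! j) = (\<Sum>a<dA. \<Sum>m<dA*dB. complex_of_real (mu ! m) * (cnj (g m a j) * g m a j))"
    using K[OF j j] Xdiag j xl by simp
  also have "\<dots> = complex_of_real (\<Sum>a<dA. \<Sum>m<dA*dB. mu ! m * (cmod (g m a j))\<^sup>2)"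
    by (simp add: cmod_sq_c mult_ac)
  finally show ?thesis by (simp only: of_real_eq_iff)
qed

lemma quad: "(\<Sum>j<dB. x ! j * (cmod (y j))\<^sup>2) =
   (\<Sum>a<dA. \<Sum>m<dA*dB. mu ! m * (cmod (\<Sum>j<dB. g m a j * y j))\<^sup>2)"
proof -
  let ?M = "adj V * ptrace_A dA dB (sd U mu) * V"
  have "complex_of_real (\<Sum>j<dB. x ! j * (cmod (y j))\<^sup>2) = (\<Sum>p<dB. \<Sum>q<dB. cnj (y p) * ?M $$ (p,q) * y q)"
  proof -
    have "(\<Sum>p<dB. \<Sum>q<dB. cnj (y p) * ?M $$ (p,q) * y q) = (\<Sum>p<dB. \<Sum>q<dB. if q = p then cnj (y p) * complex_of_real (x ! p) * y p else 0)"
      unfolding Xdiag using xl by (intro sum.cong refl) auto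
    also have "\<dots> = (\<Sum>p<dB. complex_of_real (x ! p * (cmod (y p))\<^sup>2))"
      by (simp add: cmod_sq_c mult_ac)
    finally show ?thesis by simp
  qed
  also have "\<dots> = (\<Sum>p<dB. \<Sum>q<dB. \<Sum>a<dA. \<Sum>m<dA*dB.
        complex_of_real (mu ! m) * (cnj (g m a p * y p) * (g m a q * y q)))"
    by (intro sum.cong refl) (simp add: K sum_distrib_left sum_distrib_right mult_ac)
  also have "\<dots> = (\<Sum>a<dA. \<Sum>m<dA*dB. \<Sum>p<dB. \<Sum>q<dB.
        complex_of_real (mu ! m) * (cnj (g m a p * y p) * (g m a q * y q)))"
    by (rule sum_swap4[symmetric])
  also have "\<dots> = (\<Sum>a<dA. \<Sum>m<dA*dB. complex_of_real (mu ! m) *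
        (cnj (\<Sum>j<dB. g m a j * y j) * (\<Sum>j<dB. g m a j * y j)))"
    by (intro sum.cong refl) (subst cnj_sum_prod, simp only: sum_distrib_left)
  also have "\<dots> = complex_of_real (\<Sum>a<dA. \<Sum>m<dA*dB. mu ! m * (cmod (\<Sum>j<dB. g m a j * y j))\<^sup>2)"
    by (simp add: cmod_sq_c mult_ac)
  finally show ?thesis by (simp only: of_real_eq_iff)
qed

lemma g_row: assumes m: "m < dA*dB"
  shows "(\<Sum>a<dA. \<Sum>j<dB. (cmod (g m a j))\<^sup>2) = 1"
proof -
  have "complex_of_real (\<Sum>k<dA*dB. (cmod (Gf $$ (m,k)))\<^sup>2) = (\<Sum>k<dA*dB. Gf $$ (m,k) * cnj (Gf $$ (m,k)))"
    by (simp add: cmod_sq_c)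
  also have "\<dots> = 1" using unitary_row[OF Gf_unitary m m] by simp
  finally have "(\<Sum>k<dA*dB. (cmod (Gf $$ (m,k)))\<^sup>2) = 1" by (simp only: of_real_eq_1_iff)
  then show ?thesis unfolding sum_block_split using m by (simp add: Gf_blk)
qed

lemma g_col: assumes a: "a < dA" and j: "j < dB"
  shows "(\<Sum>m<dA*dB. (cmod (g m a j))\<^sup>2) = 1"
proof -
  have k: "a*dB+j < dA*dB" using blk_lt[OF a j] .
  have "complex_of_real (\<Sum>m<dA*dB. (cmod (Gf $$ (m,a*dB+j)))\<^sup>2) = (\<Sum>m<dA*dB. cnj (Gf $$ (m,a*dB+j)) * Gf $$ (m,a*dB+j))"
    by (simp add: cmod_sq_c mult_ac)
  also have "\<dots> = 1" using unitary_col[OF Gf_unitary k k] by simp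
  finally have "(\<Sum>m<dA*dB. (cmod (Gf $$ (m,a*dB+j)))\<^sup>2) = 1" by (simp only: of_real_eq_1_iff)
  then show ?thesis using a j by (simp add: Gf_blk)
qed

end

lemma young_w:
  fixes a b q :: real
  assumes "0 \<le> a" "0 \<le> b" "0 \<le> q" "q \<le> 1"
  shows "a powr q * b powr (1 - q) \<le> q * a + (1 - q) * b"
proof (cases "a = 0 \<or> b = 0 \<or> q = 0 \<or> q = 1")
  case True
  then show ?thesis using assms by (auto simp: powr_def)
next
  case False
  then have a: "a > 0" and b: "b > 0" and q: "0 < q" "q < 1" using assms by auto
  define M where "M = q * a + (1 - q) * b"
  have M: "M > 0" using a b q by (simp add: M_def add_pos_pos)
  have "ln (a / M) \<le> a / M - 1" using a M by (intro ln_le_minus_one) simp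
  moreover have "ln (b / M) \<le> b / M - 1" using b M by (intro ln_le_minus_one) simp
  ultimately have "q * ln (a / M) + (1 - q) * ln (b / M) \<le> q * (a / M - 1) + (1 - q) * (b / M - 1)"
    using q by (intro add_mono mult_left_mono) auto
  also have "\<dots> = 0" using M by (simp add: M_def field_simps)
  finally have "q * ln a + (1 - q) * ln b \<le> ln M"
    using a b M by (simp add: ln_div algebra_simps)
  then have "exp (q * ln a + (1 - q) * ln b) \<le> M" using M by (metis exp_le_cancel_iff exp_ln)
  then show ?thesis using a b by (simp add: powr_def exp_add M_def)
qed

lemma jensen_powr:
  fixes c y :: "'i \<Rightarrow> real"
  assumes S: "finite S" and c: "\<And>i. i \<in> S \<Longrightarrow> c i \<ge> 0" and y: "\<And>i. i \<in> S \<Longrightarrow> y i \<ge> 0"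
    and al: "0 < al" "al \<le> 1"
  shows "(\<Sum>i\<in>S. c i * y i powr al) \<le> (\<Sum>i\<in>S. c i) powr (1 - al) * (\<Sum>i\<in>S. c i * y i) powr al"
proof -
  define C where "C = (\<Sum>i\<in>S. c i)"
  define M where "M = (\<Sum>i\<in>S. c i * y i)"
  have C0: "C \<ge> 0" using c by (simp add: C_def sum_nonneg)
  have M0: "M \<ge> 0" using c y by (simp add: M_def sum_nonneg)
  show ?thesis
  proof (cases "M = 0")
    case True
    then have "\<forall>i\<in>S. c i * y i = 0" using c y S unfolding M_def
      by (subst (asm) sum_nonneg_eq_0_iff) auto
    then have "\<forall>i\<in>S. c i * y i powr al = 0" using al by (auto simp: powr_def)
    then show ?thesis using True by (simp add: M_def)
  next
    case False
    then have Mp: "M > 0" using M0 by simp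
    have Cp: "C > 0"
    proof (rule ccontr)
      assume "\<not> C > 0"
      then have "C = 0" using C0 by simp
      then have "\<forall>i\<in>S. c i = 0" using c S unfolding C_def by (subst (asm) sum_nonneg_eq_0_iff) auto
      then show False using Mp by (simp add: M_def)
    qed
    define r where "r = M / C"
    have rp: "r > 0" using Mp Cp by (simp add: r_def)
    have t: "c i * (y i powr al * r powr (1 - al)) \<le> c i * (al * y i + (1 - al) * r)" if i: "i \<in> S" for i
      using young_w[of "y i" r al] y[OF i] rp al c[OF i] by (intro mult_left_mono) auto
    have "(\<Sum>i\<in>S. c i * y i powr al) * r powr (1 - al) = (\<Sum>i\<in>S. c i * (y i powr al * r powr (1 - al)))"
      by (simp add: sum_distrib_left mult_ac)
    also have "\<dots> \<le> (\<Sum>i\<in>S. c i * (al * y i + (1 - al) * r))" by (rule sum_mono[OF t])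
    also have "\<dots> = al * M + (1 - al) * r * C"
      by (simp add: M_def C_def distrib_left sum.distrib sum_distrib_left sum_distrib_right mult_ac)
    also have "\<dots> = M" using Cp by (simp add: r_def field_simps)
    finally have "(\<Sum>i\<in>S. c i * y i powr al) * r powr (1 - al) \<le> M" .
    then have "(\<Sum>i\<in>S. c i * y i powr al) \<le> M / r powr (1 - al)"
      using rp by (simp add: pos_le_divide_eq)
    also have "M / r powr (1 - al) = C powr (1 - al) * M powr al"
    proof -
      have e1: "r powr (1 - al) = M powr (1 - al) / C powr (1 - al)" using Mp Cp by (simp add: r_def powr_divide)
      have e2: "M = M powr (1 - al) * M powr al" using Mp by (simp add: powr_add[symmetric])
      have p1: "M powr (1 - al) > 0" "C powr (1 - al) > 0" using Mp Cp by auto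
      have "M / r powr (1 - al) = M * C powr (1 - al) / M powr (1 - al)" unfolding e1 using p1 by simp
      also have "\<dots> = C powr (1 - al) * M powr al" using p1 by (subst e2) (simp add: field_simps)
      finally show ?thesis .
    qed
    finally show ?thesis by (simp add: C_def M_def)
  qed
qed

locale setting2 = setting dA dB U V mu x for dA dB U V mu x +
  fixes lam :: "real list" and al :: real
  assumes laml: "length lam = dA*dB" and lam0: "\<And>m. m < dA*dB \<Longrightarrow> lam ! m \<ge> 0"
    and lam1: "(\<Sum>m<dA*dB. lam ! m) = 1"
    and mu_def: "mu = map (\<lambda>l. l powr al) lam"
    and al1: "1/2 \<le> al" and al2: "al \<le> 1"
begin

lemma mu_nth: "m < dA*dB \<Longrightarrow> mu ! m = lam ! m powr al"
  using laml by (simp add: mu_def)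

lemma mu0: "m < dA*dB \<Longrightarrow> mu ! m \<ge> 0"
  by (simp add: mu_nth)

lemma x0: "j < dB \<Longrightarrow> x ! j \<ge> 0"
  using K1 mu0 by (simp, intro sum_nonneg mult_nonneg_nonneg) auto

lemma vanish: assumes j: "j < dB" and x: "x ! j = 0" and m: "m < dA*dB" and l: "lam ! m > 0" and a: "a < dA"
  shows "g m a j = 0"
proof -
  have "(\<Sum>a<dA. \<Sum>m<dA*dB. mu ! m * (cmod (g m a j))\<^sup>2) = 0" using K1[OF j] x by simp
  then have "\<forall>a\<in>{..<dA}. (\<Sum>m<dA*dB. mu ! m * (cmod (g m a j))\<^sup>2) = 0"
    using mu0 by (subst (asm) sum_nonneg_eq_0_iff) (auto intro!: sum_nonneg)
  then have "(\<Sum>m<dA*dB. mu ! m * (cmod (g m a j))\<^sup>2) = 0" using a by simp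
  then have "\<forall>m\<in>{..<dA*dB}. mu ! m * (cmod (g m a j))\<^sup>2 = 0"
    using mu0 by (subst (asm) sum_nonneg_eq_0_iff) auto
  then have "mu ! m * (cmod (g m a j))\<^sup>2 = 0" using m by simp
  moreover have "mu ! m > 0" using l m by (simp add: mu_nth)
  ultimately show ?thesis by simp
qed

lemma keybound: assumes m: "m < dA*dB" and l: "lam ! m > 0" and a: "a < dA"
  shows "lam ! m powr al * (\<Sum>j<dB. if x ! j > 0 then (cmod (g m a j))\<^sup>2 / x ! j else 0) \<le> 1"
proof -
  define s where "s = (\<Sum>j<dB. if x ! j > 0 then (cmod (g m a j))\<^sup>2 / x ! j else 0)"
  define y where "y j = (if x ! j > 0 then cnj (g m a j) / complex_of_real (x ! j) else 0)" for j
  have s0: "s \<ge> 0" unfolding s_def by (intro sum_nonneg) auto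
  have "(\<Sum>j<dB. x ! j * (cmod (y j))\<^sup>2) = s"
    unfolding s_def
  proof (intro sum.cong refl)
    fix j assume "j \<in> {..<dB}"
    show "x ! j * (cmod (y j))\<^sup>2 = (if x ! j > 0 then (cmod (g m a j))\<^sup>2 / x ! j else 0)"
      by (auto simp: y_def norm_divide power_divide power2_eq_square)
  qed
  moreover have "(\<Sum>j<dB. g m a j * y j) = complex_of_real s"
    unfolding s_def of_real_sum
  proof (intro sum.cong refl)
    fix j assume "j \<in> {..<dB}"
    show "g m a j * y j = complex_of_real (if x ! j > 0 then (cmod (g m a j))\<^sup>2 / x ! j else 0)"
      by (auto simp: y_def cmod_sq_c[symmetric])
  qed
  moreover have "mu ! m * (cmod (\<Sum>j<dB. g m a j * y j))\<^sup>2 \<le>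
      (\<Sum>a<dA. \<Sum>m<dA*dB. mu ! m * (cmod (\<Sum>j<dB. g m a j * y j))\<^sup>2)"
  proof -
    have "mu ! m * (cmod (\<Sum>j<dB. g m a j * y j))\<^sup>2 \<le> (\<Sum>m<dA*dB. mu ! m * (cmod (\<Sum>j<dB. g m a j * y j))\<^sup>2)"
      using m mu0 by (intro member_le_sum) auto
    also have "\<dots> \<le> (\<Sum>a<dA. \<Sum>m<dA*dB. mu ! m * (cmod (\<Sum>j<dB. g m a j * y j))\<^sup>2)"
      using a mu0 by (intro member_le_sum[of a "{..<dA}" "\<lambda>a. \<Sum>m<dA*dB. mu ! m * (cmod (\<Sum>j<dB. g m a j * y j))\<^sup>2"])
        (auto intro!: sum_nonneg)
    finally show ?thesis .
  qed
  ultimately have "mu ! m * s\<^sup>2 \<le> s" using quad[of y] s0 by simp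
  then have "mu ! m * s \<le> 1" using s0
    by (cases "s = 0") (auto simp: power2_eq_square mult.assoc[symmetric])
  then show ?thesis using m by (simp add: mu_nth s_def)
qed

lemma al_pos: "al > 0" using al1 by simp

lemma xj_bound: assumes j: "j < dB"
  shows "x ! j \<le> real dA powr (1 - al) * (\<Sum>a<dA. \<Sum>m<dA*dB. (cmod (g m a j))\<^sup>2 * lam ! m) powr al"
proof -
  let ?S = "{..<dA} \<times> {..<dA*dB}"
  let ?c = "\<lambda>(a,m). (cmod (g m a j))\<^sup>2"
  let ?y = "\<lambda>(a,m). lam ! m"
  have "x ! j = (\<Sum>i\<in>?S. ?c i * ?y i powr al)"
    unfolding K1[OF j] sum.cartesian_product
    by (intro sum.cong refl) (auto simp: mu_nth mult.commute split: prod.splits)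
  also have "\<dots> \<le> (\<Sum>i\<in>?S. ?c i) powr (1 - al) * (\<Sum>i\<in>?S. ?c i * ?y i) powr al"
    by (rule jensen_powr) (use al_pos al2 lam0 in auto)
  also have "(\<Sum>i\<in>?S. ?c i) = real dA"
    using g_col j by (simp add: sum.cartesian_product')
  also have "(\<Sum>i\<in>?S. ?c i * ?y i) = (\<Sum>a<dA. \<Sum>m<dA*dB. (cmod (g m a j))\<^sup>2 * lam ! m)"
    by (simp add: sum.cartesian_product')
  finally show ?thesis .
qed

lemma Zbound: "(\<Sum>j<dB. x ! j powr (1/al)) \<le> real dA"
proof -
  define P where "P j = (\<Sum>a<dA. \<Sum>m<dA*dB. (cmod (g m a j))\<^sup>2 * lam ! m)" for j
  have P0: "P j \<ge> 0" for j unfolding P_def using lam0 by (intro sum_nonneg mult_nonneg_nonneg) auto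
  have dA0: "real dA \<ge> 0" by simp
  have t: "x ! j powr (1/al) \<le> real dA powr ((1 - al)/al) * P j" if j: "j < dB" for j
  proof -
    have "x ! j powr (1/al) \<le> (real dA powr (1 - al) * P j powr al) powr (1/al)"
      using xj_bound[OF j] x0[OF j] al_pos by (intro powr_mono2) (auto simp: P_def)
    also have "\<dots> = real dA powr ((1 - al)/al) * P j"
      using al_pos P0[of j] dA0 by (simp add: powr_mult powr_powr)
    finally show ?thesis .
  qed
  have "(\<Sum>j<dB. P j) = (\<Sum>m<dA*dB. lam ! m * (\<Sum>a<dA. \<Sum>j<dB. (cmod (g m a j))\<^sup>2))"
  proof -
    have "(\<Sum>j<dB. P j) = (\<Sum>j<dB. \<Sum>m<dA*dB. \<Sum>a<dA. (cmod (g m a j))\<^sup>2 * lam ! m)"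
      unfolding P_def by (rule sum.cong[OF refl], rule sum.swap)
    also have "\<dots> = (\<Sum>m<dA*dB. \<Sum>j<dB. \<Sum>a<dA. (cmod (g m a j))\<^sup>2 * lam ! m)" by (rule sum.swap)
    also have "\<dots> = (\<Sum>m<dA*dB. \<Sum>a<dA. \<Sum>j<dB. (cmod (g m a j))\<^sup>2 * lam ! m)"
      by (rule sum.cong[OF refl], rule sum.swap)
    finally show ?thesis by (simp add: sum_distrib_left sum_distrib_right mult_ac)
  qed
  also have "\<dots> = 1" using lam1 g_row by simp
  finally have P1: "(\<Sum>j<dB. P j) = 1" .
  have "(\<Sum>j<dB. x ! j powr (1/al)) \<le> (\<Sum>j<dB. real dA powr ((1 - al)/al) * P j)"
    by (intro sum_mono t) simp
  also have "\<dots> = real dA powr ((1 - al)/al)" using P1 by (simp add: sum_distrib_left[symmetric])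
  also have "\<dots> \<le> real dA"
  proof (cases "dA = 0")
    case True then show ?thesis by simp
  next
    case False
    then have "real dA \<ge> 1" by simp
    moreover have "(1 - al)/al \<le> 1" using al1 al_pos by (simp add: field_simps)
    ultimately have "real dA powr ((1 - al)/al) \<le> real dA powr 1" by (intro powr_mono) auto
    then show ?thesis using False by simp
  qed
  finally show ?thesis .
qed

end

lemma term_bound:
  fixes l xx al :: real
  assumes l: "l \<ge> 0" and xx: "xx > 0" and al: "1/2 \<le> al" "al \<le> 1"
  shows "l powr (3/2) * xx powr (-(1/(2*al))) \<le> (1/(2*al)) * (l powr (1+al) / xx) + (1 - 1/(2*al)) * l"
proof (cases "l = 0")
  case True then show ?thesis by simp
next
  case False
  then have lp: "l > 0" using l by simp
  define q where "q = 1/(2*al)"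
  have q: "0 \<le> q" "q \<le> 1" using al by (auto simp: q_def divide_le_eq)
  have ex: "(1+al)*q + (1 - q) = 3/2" using al by (simp add: q_def field_simps)
  have e1: "l powr ((1+al)*q) * l powr (1 - q) = l powr (3/2)" by (metis ex powr_add)
  have "(l powr (1+al) / xx) powr q * l powr (1 - q) = l powr ((1+al)*q) * l powr (1 - q) / xx powr q"
    using lp xx by (simp add: powr_divide powr_powr)
  also have "\<dots> = l powr (3/2) * xx powr (-q)" unfolding e1 using xx by (simp add: powr_minus_divide)
  finally have e: "(l powr (1+al) / xx) powr q * l powr (1 - q) = l powr (3/2) * xx powr (-q)" .
  have "(l powr (1+al) / xx) powr q * l powr (1 - q) \<le> q * (l powr (1+al) / xx) + (1 - q) * l"
    using young_w[of "l powr (1+al) / xx" l q] lp xx q by auto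
  then show ?thesis using e by (simp add: q_def)
qed

context setting2
begin

definition Zr where "Zr = (\<Sum>j<dB. x ! j powr (1/al))"

lemma sum_x: "(\<Sum>j<dB. x ! j) = (\<Sum>m<dA*dB. mu ! m)"
proof -
  have "(\<Sum>j<dB. x ! j) = (\<Sum>j<dB. \<Sum>a<dA. \<Sum>m<dA*dB. mu ! m * (cmod (g m a j))\<^sup>2)"
    by (intro sum.cong refl) (simp add: K1)
  also have "\<dots> = (\<Sum>m<dA*dB. \<Sum>a<dA. \<Sum>j<dB. mu ! m * (cmod (g m a j))\<^sup>2)"
  proof -
    have "(\<Sum>j<dB. \<Sum>a<dA. \<Sum>m<dA*dB. mu ! m * (cmod (g m a j))\<^sup>2) = (\<Sum>j<dB. \<Sum>m<dA*dB. \<Sum>a<dA. mu ! m * (cmod (g m a j))\<^sup>2)"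
      by (rule sum.cong[OF refl], rule sum.swap)
    also have "\<dots> = (\<Sum>m<dA*dB. \<Sum>j<dB. \<Sum>a<dA. mu ! m * (cmod (g m a j))\<^sup>2)" by (rule sum.swap)
    also have "\<dots> = (\<Sum>m<dA*dB. \<Sum>a<dA. \<Sum>j<dB. mu ! m * (cmod (g m a j))\<^sup>2)"
      by (rule sum.cong[OF refl], rule sum.swap)
    finally show ?thesis .
  qed
  also have "\<dots> = (\<Sum>m<dA*dB. mu ! m)" using g_row by (simp add: sum_distrib_left[symmetric])
  finally show ?thesis .
qed

lemma exists_lam: "\<exists>m<dA*dB. lam ! m > 0"
proof (rule ccontr)
  assume "\<not> ?thesis"
  then have "\<forall>m<dA*dB. lam ! m = 0" using lam0 by force
  then show False using lam1 by simp
qed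

lemma Zr_pos: "Zr > 0"
proof -
  obtain m where m: "m < dA*dB" and l: "lam ! m > 0" using exists_lam by blast
  have "mu ! m > 0" using m l by (simp add: mu_nth)
  then have "(\<Sum>m<dA*dB. mu ! m) > 0"
    using m mu0 by (intro sum_pos2[of _ m]) auto
  then have "(\<Sum>j<dB. x ! j) > 0" using sum_x by simp
  then obtain j where j: "j < dB" and xj: "x ! j > 0"
  proof -
    assume r: "\<And>j. j < dB \<Longrightarrow> 0 < x ! j \<Longrightarrow> thesis"
    show thesis
    proof (rule ccontr)
      assume "\<not> thesis"
      then have "\<forall>j\<in>{..<dB}. x ! j \<le> 0" using r by force
      then have "(\<Sum>j<dB. x ! j) \<le> 0" by (intro sum_nonpos) auto
      then show False using \<open>(\<Sum>j<dB. x ! j) > 0\<close> by simp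
    qed
  qed
  then have "x ! j powr (1/al) > 0" by simp
  then show ?thesis unfolding Zr_def using j x0 by (intro sum_pos2[of _ j]) auto
qed

definition tau where "tau = map (\<lambda>y. (1/Zr) * y) (map (\<lambda>y. y powr (1/al)) x)"

lemma tau_len: "length tau = dB" by (simp add: tau_def xl)

lemma tau_pow: assumes j: "j < dB"
  shows "(tau ! j) powr (-(1/2)) = (if x ! j > 0 then sqrt Zr * x ! j powr (-(1/(2*al))) else 0)"
proof -
  have t: "tau ! j = x ! j powr (1/al) / Zr" using j xl by (simp add: tau_def)
  show ?thesis
  proof (cases "x ! j > 0")
    case True
    have "(x ! j powr (1/al) / Zr) powr (-(1/2)) = (x ! j powr (1/al)) powr (-(1/2)) / Zr powr (-(1/2))"
      using True Zr_pos by (simp add: powr_divide)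
    also have "\<dots> = x ! j powr (-(1/(2*al))) * Zr powr (1/2)"
    proof -
      have "(x ! j powr (1/al)) powr (-(1/2)) = x ! j powr (-(1/(2*al)))" by (simp add: powr_powr mult.commute)
      moreover have "Zr powr (-(1/2)) = 1 / Zr powr (1/2)" by (simp add: powr_minus_divide)
      ultimately show ?thesis by simp
    qed
    finally show ?thesis using True t Zr_pos by (simp add: powr_half_sqrt mult.commute)
  next
    case False
    then have "x ! j = 0" using x0[OF j] by simp
    then show ?thesis using t by simp
  qed
qed

end

context setting2
begin

definition cc where "cc m a j = (cmod (g m a j))\<^sup>2"

definition Sfin where "Sfin = (\<Sum>m<dA*dB. \<Sum>a<dA. \<Sum>j<dB. lam ! m powr (3/2) * (tau ! j) powr (-(1/2)) * cc m a j)"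

definition Im where "Im m = (\<Sum>a<dA. \<Sum>j<dB. if x ! j > 0 then lam ! m powr (3/2) * x ! j powr (-(1/(2*al))) * cc m a j else 0)"

lemma cc0: "cc m a j \<ge> 0" by (simp add: cc_def)

lemma Sfin_Im: "Sfin = sqrt Zr * (\<Sum>m<dA*dB. Im m)"
  unfolding Sfin_def Im_def sum_distrib_left
  by (intro sum.cong refl) (auto simp: tau_pow)

lemma Im_bound: assumes m: "m < dA*dB"
  shows "Im m \<le> ((1/(2*al)) * real dA + (1 - 1/(2*al))) * lam ! m"
proof (cases "lam ! m = 0")
  case True then show ?thesis by (simp add: Im_def)
next
  case False
  then have lp: "lam ! m > 0" using lam0[OF m] by simp
  define q where "q = 1/(2*al)"
  have q: "0 \<le> q" "q \<le> 1" using al1 by (auto simp: q_def divide_le_eq)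
  define l where "l = lam ! m"
  define s where "s a = (\<Sum>j<dB. if x ! j > 0 then cc m a j / x ! j else 0)" for a
  have "Im m \<le> (\<Sum>a<dA. \<Sum>j<dB. if x ! j > 0 then q * (l powr (1+al) / x ! j) * cc m a j + (1 - q) * l * cc m a j else 0)"
    unfolding Im_def
  proof (intro sum_mono)
    fix a j assume "a \<in> {..<dA}" "j \<in> {..<dB}"
    show "(if x ! j > 0 then lam ! m powr (3/2) * x ! j powr (-(1/(2*al))) * cc m a j else 0) \<le>
      (if x ! j > 0 then q * (l powr (1+al) / x ! j) * cc m a j + (1 - q) * l * cc m a j else 0)"
    proof (cases "x ! j > 0")
      case True
      have tb: "lam ! m powr (3/2) * x ! j powr (-(1/(2*al))) \<le> q * (l powr (1+al) / x ! j) + (1 - q) * l"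
        using term_bound[of l "x ! j" al] lp al1 al2 True by (simp add: l_def q_def)
      have "lam ! m powr (3/2) * x ! j powr (-(1/(2*al))) * cc m a j \<le> (q * (l powr (1+al) / x ! j) + (1 - q) * l) * cc m a j"
        by (rule mult_right_mono[OF tb cc0])
      then show ?thesis using True by (simp add: distrib_right)
    qed simp
  qed
  also have "\<dots> = q * l powr (1+al) * (\<Sum>a<dA. s a) + (1 - q) * l * (\<Sum>a<dA. \<Sum>j<dB. if x ! j > 0 then cc m a j else 0)"
    unfolding s_def sum_distrib_left sum.distrib[symmetric]
    by (intro sum.cong refl) auto
  also have "\<dots> \<le> q * (l * real dA) + (1 - q) * l * 1"
  proof -
    have "l powr (1+al) * (\<Sum>a<dA. s a) = l * (\<Sum>a<dA. l powr al * s a)"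
      using lp by (simp add: l_def powr_add sum_distrib_left sum_distrib_right mult_ac)
    also have "\<dots> \<le> l * (\<Sum>a<dA. 1)"
    proof -
      have "(\<Sum>a<dA. l powr al * s a) \<le> (\<Sum>a<dA. 1)"
      proof (rule sum_mono)
        fix a assume a: "a \<in> {..<dA}"
        have "s a = (\<Sum>j<dB. if 0 < x ! j then (cmod (g m a j))\<^sup>2 / x ! j else 0)"
          unfolding s_def cc_def by simp
        then show "l powr al * s a \<le> 1" using keybound[OF m lp] a by (simp add: l_def)
      qed
      then show ?thesis using lp l_def by (intro mult_left_mono) auto
    qed
    finally have h1: "l powr (1+al) * (\<Sum>a<dA. s a) \<le> l * real dA" by simp
    have "(\<Sum>a<dA. \<Sum>j<dB. if x ! j > 0 then cc m a j else 0) \<le> (\<Sum>a<dA. \<Sum>j<dB. cc m a j)"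
      by (intro sum_mono) (auto simp: cc0)
    also have "\<dots> = 1" using g_row[OF m] by (simp add: cc_def)
    finally have h2: "(\<Sum>a<dA. \<Sum>j<dB. if x ! j > 0 then cc m a j else 0) \<le> 1" .
    have i1: "q * (l powr (1+al) * (\<Sum>a<dA. s a)) \<le> q * (l * real dA)" using mult_left_mono[OF h1 q(1)] .
    have i2: "((1 - q) * l) * (\<Sum>a<dA. \<Sum>j<dB. if x ! j > 0 then cc m a j else 0) \<le> ((1 - q) * l) * 1"
      using h2 q lp l_def by (intro mult_left_mono) auto
    show ?thesis using add_mono[OF i1 i2] by (simp add: mult.assoc)
  qed
  finally show ?thesis by (simp add: q_def l_def algebra_simps)
qed

lemma Sfin_bound: "Sfin \<le> sqrt Zr * real dA"
proof -
  have "(\<Sum>m<dA*dB. Im m) \<le> (\<Sum>m<dA*dB. ((1/(2*al)) * real dA + (1 - 1/(2*al))) * lam ! m)"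
    by (intro sum_mono Im_bound) simp
  also have "\<dots> = (1/(2*al)) * real dA + (1 - 1/(2*al))" using lam1 by (simp add: sum_distrib_left[symmetric])
  also have "\<dots> \<le> real dA"
  proof -
    have dA: "real dA \<ge> 1" using exists_lam by (cases dA) auto
    have "(1/(2*al)) * real dA + (1 - 1/(2*al)) = real dA - (1 - 1/(2*al)) * (real dA - 1)"
      using al_pos by (simp add: field_simps)
    moreover have "(1 - 1/(2*al)) * (real dA - 1) \<ge> 0" using al1 dA by (intro mult_nonneg_nonneg) (auto simp: divide_le_eq)
    ultimately show ?thesis by simp
  qed
  finally have "(\<Sum>m<dA*dB. Im m) \<le> real dA" .
  then show ?thesis unfolding Sfin_Im using Zr_pos by (intro mult_left_mono) auto
qed

lemma Sfin_pos: "Sfin > 0"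
proof -
  obtain m where m: "m < dA*dB" and lp: "lam ! m > 0" using exists_lam by blast
  have "(\<Sum>a<dA. \<Sum>j<dB. if x ! j > 0 then cc m a j else 0) = (\<Sum>a<dA. \<Sum>j<dB. cc m a j)"
  proof (intro sum.cong refl)
    fix a j assume a: "a \<in> {..<dA}" and j: "j \<in> {..<dB}"
    show "(if x ! j > 0 then cc m a j else 0) = cc m a j"
      using vanish[of j m a] x0[of j] a j m lp by (auto simp: cc_def)
  qed
  also have "\<dots> = 1" using g_row[OF m] by (simp add: cc_def)
  finally have one: "(\<Sum>a<dA. \<Sum>j<dB. if x ! j > 0 then cc m a j else 0) = 1" .
  obtain a j where a: "a < dA" and j: "j < dB" and xj: "x ! j > 0" and cj: "cc m a j > 0"
  proof -
    assume r: "\<And>a j. a < dA \<Longrightarrow> j < dB \<Longrightarrow> 0 < x ! j \<Longrightarrow> 0 < cc m a j \<Longrightarrow> thesis"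
    show thesis
    proof (rule ccontr)
      assume "\<not> thesis"
      then have "\<forall>a<dA. \<forall>j<dB. (if x ! j > 0 then cc m a j else 0) = 0" using r cc0[of m] 
        by (metis less_eq_real_def)
      then have "(\<Sum>a<dA. \<Sum>j<dB. if x ! j > 0 then cc m a j else 0) = 0" by simp
      then show False using one by simp
    qed
  qed
  have t: "lam ! m powr (3/2) * x ! j powr (-(1/(2*al))) * cc m a j > 0" using lp xj cj by simp
  have nn: "\<And>m a j. (if x ! j > 0 then lam ! m powr (3/2) * x ! j powr (-(1/(2*al))) * cc m a j else 0) \<ge> 0"
    by (simp add: cc0)
  have "Im m \<ge> (\<Sum>j<dB. if x ! j > 0 then lam ! m powr (3/2) * x ! j powr (-(1/(2*al))) * cc m a j else 0)"
    unfolding Im_def using a nn by (intro member_le_sum[of a "{..<dA}" "\<lambda>a. \<Sum>j<dB. if x ! j > 0 then lam ! m powr (3/2) * x ! j powr (-(1/(2*al))) * cc m a j else 0"]) (auto intro: sum_nonneg)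
  moreover have "(\<Sum>j<dB. if x ! j > 0 then lam ! m powr (3/2) * x ! j powr (-(1/(2*al))) * cc m a j else 0) \<ge>
      lam ! m powr (3/2) * x ! j powr (-(1/(2*al))) * cc m a j"
  proof -
    have "(if x ! j > 0 then lam ! m powr (3/2) * x ! j powr (-(1/(2*al))) * cc m a j else 0) \<le>
      (\<Sum>j<dB. if x ! j > 0 then lam ! m powr (3/2) * x ! j powr (-(1/(2*al))) * cc m a j else 0)"
      by (rule member_le_sum) (use j nn in auto)
    then show ?thesis using xj by simp
  qed
  ultimately have Imp: "Im m > 0" using t by linarith
  have "(\<Sum>m<dA*dB. Im m) \<ge> Im m"
    using m nn by (intro member_le_sum) (auto simp: Im_def intro!: sum_nonneg)
  then have "(\<Sum>m<dA*dB. Im m) > 0" using Imp by linarith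
  then show ?thesis unfolding Sfin_Im using Zr_pos by simp
qed

end

lemma sd_mult_same: assumes W: "unitary_mat n W" and a: "length a = n" and b: "length b = n"
  shows "sd W a * sd W b = sd W (map (\<lambda>k. a ! k * b ! k) [0..<n])"
proof -
  have Wc: "W \<in> carrier_mat n n" and aWc: "adj W \<in> carrier_mat n n" and e: "adj W * W = 1\<^sub>m n"
    using W by (auto simp: unitary_mat_def)
  have Da: "diag_real a \<in> carrier_mat n n" and Db: "diag_real b \<in> carrier_mat n n" using a b by auto
  have DD: "diag_real a * diag_real b = diag_real (map (\<lambda>k. a ! k * b ! k) [0..<n])"
  proof (rule eq_matI)
    fix i j assume "i < dim_row (diag_real (map (\<lambda>k. a ! k * b ! k) [0..<n]))"
      "j < dim_col (diag_real (map (\<lambda>k. a ! k * b ! k) [0..<n]))"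
    then have i: "i < n" and j: "j < n" by auto
    show "(diag_real a * diag_real b) $$ (i,j) = diag_real (map (\<lambda>k. a ! k * b ! k) [0..<n]) $$ (i,j)"
      using diag_mult_idx[OF Db a i j] i j b by simp
  qed (use Da Db in auto)
  have "sd W a * sd W b = W * diag_real a * (adj W * W) * diag_real b * adj W"
    unfolding sd_def using Wc aWc Da Db by (simp add: sq_assoc[of _ n])
  also have "\<dots> = W * (diag_real a * diag_real b) * adj W"
    using e Wc aWc Da Db by (simp add: sq_assoc[of _ n] left_mult_one_mat[OF Db])
  finally show ?thesis unfolding DD by (simp add: sd_def)
qed

context setting2
begin

lemma tau_nth: "j < dB \<Longrightarrow> tau ! j = x ! j powr (1/al) / Zr"
  using xl by (simp add: tau_def)

lemma tau_pos_iff: "j < dB \<Longrightarrow> (tau ! j > 0) = (x ! j > 0)"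
  using Zr_pos x0[of j] by (cases "x ! j = 0") (auto simp: tau_nth)

lemma supp_incl:
  "supp (dA*dB) (sd U lam) \<subseteq> supp (dA*dB) (sd (id_tensor dA dB V) (tlist dA dB tau))"
proof -
  let ?n = "dA*dB"
  let ?W = "id_tensor dA dB V"
  let ?t = "tlist dA dB tau"
  define tp where "tp = map (\<lambda>y. if y > 0 then 1 / y else 0) ?t"
  define ind where "ind = map (\<lambda>k. ?t ! k * tp ! k) [0..<?n]"
  have Wu: "unitary_mat ?n ?W" by (rule id_tensor_unitary[OF V dB_pos])
  have Wc: "?W \<in> carrier_mat ?n ?n" and aWc: "adj ?W \<in> carrier_mat ?n ?n"
    and WW: "?W * adj ?W = 1\<^sub>m ?n" using Wu by (auto simp: unitary_mat_def)
  have lens: "length tp = ?n" "length ind = ?n" "length lam = ?n" by (auto simp: tp_def ind_def laml)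
  have ind_nth: "ind ! k = (if ?t ! k > 0 then 1 else 0)" if "k < ?n" for k
    using that by (simp add: ind_def tp_def)
  define H where "H = adj ?W * U"
  have Hc: "H \<in> carrier_mat ?n ?n" using aWc Uc by (simp add: H_def)
  have HGf: "H $$ (k,m) = cnj (Gf $$ (m,k))" if "k < ?n" "m < ?n" for k m
  proof -
    have "adj Gf = H" unfolding Gf_def H_def using Uc Wc by (simp add: adj_mult[of _ ?n ?n _ ?n])
    then show ?thesis using that Gf_unitary by (metis adj_idx unitary_carrier carrier_matD)
  qed
  have key: "diag_real ind * H * diag_real lam = H * diag_real lam"
  proof (rule eq_matI)
    fix k m assume "k < dim_row (H * diag_real lam)" "m < dim_col (H * diag_real lam)"
    then have k: "k < ?n" and m: "m < ?n" using Hc lens by auto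
    have l: "(diag_real ind * H * diag_real lam) $$ (k,m) = complex_of_real (ind ! k) * H $$ (k,m) * complex_of_real (lam ! m)"
    proof -
      have "diag_real ind * H \<in> carrier_mat ?n ?n" using Hc lens by (metis diag_carrier mult_carrier_mat)
      then show ?thesis
        using mult_diag_idx[OF _ lens(3) k m, of "diag_real ind * H"] diag_mult_idx[OF Hc lens(2) k m] by simp
    qed
    have r: "(H * diag_real lam) $$ (k,m) = H $$ (k,m) * complex_of_real (lam ! m)"
      using mult_diag_idx[OF Hc lens(3) k m] .
    show "(diag_real ind * H * diag_real lam) $$ (k,m) = (H * diag_real lam) $$ (k,m)"
    proof (cases "?t ! k > 0 \<or> lam ! m = 0")
      case True
      then show ?thesis unfolding l r using ind_nth[OF k] by auto
    next
      case False
      define a where "a = k div dB"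
      define j where "j = k mod dB"
      have a: "a < dA" using k by (simp add: a_def less_mult_imp_div_less)
      have j: "j < dB" using dB_pos by (simp add: j_def)
      have kk: "k = a*dB + j" by (simp add: a_def j_def)
      have "\<not> tau ! j > 0" using False k by (simp add: j_def)
      then have xj: "x ! j = 0" using tau_pos_iff[OF j] x0[OF j] by simp
      have lp: "lam ! m > 0" using False lam0[OF m] by simp
      have "Gf $$ (m,k) = 0" unfolding kk using Gf_blk[OF m a j] vanish[OF j xj m lp a] by simp
      then have "H $$ (k,m) = 0" using HGf[OF k m] by simp
      then show ?thesis unfolding l r by simp
    qed
  qed (use Hc lens in auto)
  define K where "K = sd ?W tp * sd U lam"
  have Kc: "K \<in> carrier_mat ?n ?n" using Wc Uc lens by (simp add: K_def)
  have tt: "sd ?W ?t * sd ?W tp = sd ?W ind"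
    unfolding ind_def by (rule sd_mult_same[OF Wu]) (auto simp: lens)
  have Dc: "diag_real ind \<in> carrier_mat ?n ?n" "diag_real lam \<in> carrier_mat ?n ?n" using lens by (metis diag_carrier)+
  have aUc: "adj U \<in> carrier_mat ?n ?n" using Uc by simp
  have "sd ?W ?t * K = sd ?W ind * sd U lam"
    unfolding K_def using Wc Uc lens tt by (simp add: sq_assoc[of _ ?n, symmetric])
  also have "\<dots> = ?W * (diag_real ind * H * diag_real lam) * adj U"
    unfolding sd_def H_def using Wc aWc Uc aUc Dc by (simp add: sq_assoc[of _ ?n])
  also have "\<dots> = ?W * H * diag_real lam * adj U"
    unfolding key using Wc aWc Uc aUc Dc Hc by (simp add: sq_assoc[of _ ?n])
  also have "\<dots> = sd U lam"
    unfolding sd_def H_def using Wc aWc Uc aUc Dc WW by (simp add: sq_assoc[of _ ?n] flip: sq_assoc[of ?W ?n "adj ?W"])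
  finally have TK: "sd ?W ?t * K = sd U lam" .
  show ?thesis
  proof
    fix w assume "w \<in> supp ?n (sd U lam)"
    then obtain v where v: "v \<in> carrier_vec ?n" and w: "w = sd U lam *\<^sub>v v" by (auto simp: supp_def)
    have "w = sd ?W ?t *\<^sub>v (K *\<^sub>v v)" unfolding w TK[symmetric]
      using Wc Kc v by (metis assoc_mult_mat_vec sd_carrier tlist_len)
    moreover have "K *\<^sub>v v \<in> carrier_vec ?n" using Kc v by simp
    ultimately show "w \<in> supp ?n (sd ?W ?t)" by (auto simp: supp_def)
  qed
qed

end

lemma ptrace_carrier: "ptrace_A dA dB Y \<in> carrier_mat dB dB"
  by (simp add: ptrace_A_def)

lemma ptrace_herm: assumes Y: "Y \<in> carrier_mat (dA*dB) (dA*dB)" and h: "adj Y = Y"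
  shows "adj (ptrace_A dA dB Y) = ptrace_A dA dB Y"
proof (rule eq_matI)
  fix i j assume "i < dim_row (ptrace_A dA dB Y)" "j < dim_col (ptrace_A dA dB Y)"
  then have i: "i < dB" and j: "j < dB" by (auto simp: ptrace_A_def)
  have "adj (ptrace_A dA dB Y) $$ (i,j) = cnj (\<Sum>a<dA. Y $$ (a*dB + j, a*dB + i))"
    using i j by (simp add: ptrace_A_def)
  also have "\<dots> = (\<Sum>a<dA. adj Y $$ (a*dB + i, a*dB + j))"
    using i j Y by (auto simp: blk_lt intro!: sum.cong)
  also have "\<dots> = ptrace_A dA dB Y $$ (i,j)" using h i j by (simp add: ptrace_A_def)
  finally show "adj (ptrace_A dA dB Y) $$ (i,j) = ptrace_A dA dB Y $$ (i,j)" .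
qed (auto simp: ptrace_A_def)

theorem lemma5:
  fixes dA dB :: nat and \<alpha> :: real and \<rho> :: "complex mat"
  assumes "1/2 \<le> \<alpha>" and "\<alpha> \<le> 1"
    and "density (dA * dB) \<rho>"
  shows "let M = mat_powr dB (ptrace_A dA dB (mat_powr (dA * dB) \<rho> \<alpha>)) (1 / \<alpha>);
             Z = mtrace M;
             \<sigma> = (1 / Z) \<cdot>\<^sub>m M
         in petz_renyi (dA * dB) (3/2) \<rho> (id_tensor dA dB \<sigma>) \<le> ereal (4 * ln (real dA))"
proof -
  let ?n = "dA * dB"
  have rc: "\<rho> \<in> carrier_mat ?n ?n" and rh: "adj \<rho> = \<rho>"
    and rpsd: "\<And>v. v \<in> carrier_vec ?n \<Longrightarrow> 0 \<le> Re (conjugate v \<bullet> (\<rho> *\<^sub>v v))"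
    and rtr: "mtrace \<rho> = 1"
    using assms(3) by (auto simp: density_def psd_def)
  obtain U lam where U: "unitary_mat ?n U" and laml: "length lam = ?n" and rd: "\<rho> = sd U lam"
    using hermitian_decomp[OF rc rh] by blast
  have Uc: "U \<in> carrier_mat ?n ?n" using U by (simp add: unitary_mat_def)
  have lam0: "lam ! m \<ge> 0" if m: "m < ?n" for m
  proof -
    have "col U m \<in> carrier_vec ?n" using col_dim[of U m] Uc by simp
    from rpsd[OF this] show ?thesis using quad_sd[OF U laml m] rd by simp
  qed
  have lam1: "(\<Sum>m<?n. lam ! m) = 1"
    using rtr mtrace_sd[OF U laml] rd by (metis of_real_eq_1_iff)
  have dBp: "dB > 0" using lam1 by (cases dB) auto
  define mu where "mu = map (\<lambda>l. l powr \<alpha>) lam"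
  have mul: "length mu = ?n" using laml by (simp add: mu_def)
  have Yd: "mat_powr ?n \<rho> \<alpha> = sd U mu" unfolding rd mu_def by (rule mat_powr_sd[OF U laml])
  define Xm where "Xm = ptrace_A dA dB (sd U mu)"
  have Xc: "Xm \<in> carrier_mat dB dB" by (simp add: Xm_def ptrace_carrier)
  have Xh: "adj Xm = Xm" unfolding Xm_def using Uc mul by (intro ptrace_herm sd_hermitian) auto
  obtain V x where V: "unitary_mat dB V" and xl: "length x = dB" and Xd: "Xm = sd V x"
    using hermitian_decomp[OF Xc Xh] by blast
  interpret s2: setting2 dA dB U V mu x lam \<alpha>
    by unfold_locales (use U mul V xl Xd Xm_def dBp laml lam0 lam1 mu_def assms(1,2) in auto)
  let ?W = "id_tensor dA dB V"
  have Wu: "unitary_mat ?n ?W" by (rule id_tensor_unitary[OF V dBp])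
  define xa where "xa = map (\<lambda>y. y powr (1/\<alpha>)) x"
  have Md: "mat_powr dB (ptrace_A dA dB (mat_powr ?n \<rho> \<alpha>)) (1/\<alpha>) = sd V xa"
    unfolding Yd Xm_def[symmetric] Xd xa_def by (rule mat_powr_sd[OF V xl])
  have Zd: "mtrace (sd V xa) = complex_of_real s2.Zr"
    using mtrace_sd[OF V, of xa] xl by (simp add: xa_def s2.Zr_def)
  have sd: "(1 / complex_of_real s2.Zr) \<cdot>\<^sub>m sd V xa = sd V s2.tau"
  proof -
    have "(1 / complex_of_real s2.Zr) = complex_of_real (1 / s2.Zr)" by simp
    then show ?thesis using smult_sd[of V dB xa "1 / s2.Zr"] V xl
      by (simp add: s2.tau_def xa_def unitary_mat_def)
  qed
  have Td: "id_tensor dA dB (sd V s2.tau) = sd ?W (tlist dA dB s2.tau)"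
    by (rule id_tensor_sd[OF V s2.tau_len dBp])
  have supp: "supp ?n \<rho> \<subseteq> supp ?n (sd ?W (tlist dA dB s2.tau))"
    unfolding rd by (rule s2.supp_incl)
  have p1: "mat_powr ?n \<rho> (3/2) = sd U (map (\<lambda>y. y powr (3/2)) lam)"
    unfolding rd by (rule mat_powr_sd[OF U laml])
  have p2: "mat_powr ?n (sd ?W (tlist dA dB s2.tau)) (1 - 3/2) = sd ?W (map (\<lambda>y. y powr (1 - 3/2)) (tlist dA dB s2.tau))"
    by (rule mat_powr_sd[OF Wu]) simp
  have tr: "Re (mtrace (mat_powr ?n \<rho> (3/2) * mat_powr ?n (sd ?W (tlist dA dB s2.tau)) (1 - 3/2))) = s2.Sfin"
  proof -
    have "mtrace (mat_powr ?n \<rho> (3/2) * mat_powr ?n (sd ?W (tlist dA dB s2.tau)) (1 - 3/2)) =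
      (\<Sum>m<?n. \<Sum>k<?n. complex_of_real (lam ! m powr (3/2) * (tlist dA dB s2.tau ! k) powr (1 - 3/2) *
         (cmod ((adj U * ?W) $$ (m,k)))\<^sup>2))"
      unfolding p1 p2 using mtrace_sd_sd[OF U Wu, of "map (\<lambda>y. y powr (3/2)) lam" "map (\<lambda>y. y powr (1 - 3/2)) (tlist dA dB s2.tau)"] laml
      by simp
    also have "\<dots> = complex_of_real (\<Sum>m<?n. \<Sum>a<dA. \<Sum>j<dB. lam ! m powr (3/2) * (s2.tau ! j) powr (-(1/2)) * s2.cc m a j)"
      unfolding of_real_sum
    proof (rule sum.cong[OF refl])
      fix m assume m: "m \<in> {..<?n}"
      show "(\<Sum>k<?n. complex_of_real (lam ! m powr (3/2) * (tlist dA dB s2.tau ! k) powr (1 - 3/2) *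
         (cmod ((adj U * ?W) $$ (m,k)))\<^sup>2)) =
        (\<Sum>a<dA. \<Sum>j<dB. complex_of_real (lam ! m powr (3/2) * (s2.tau ! j) powr (-(1/2)) * s2.cc m a j))"
        unfolding sum_block_split
        using m by (intro sum.cong refl) (auto simp: blk_lt s2.cc_def s2.Gf_blk[symmetric] s2.Gf_def)
    qed
    finally show ?thesis by (simp add: s2.Sfin_def)
  qed
  have Sp: "s2.Sfin > 0" by (rule s2.Sfin_pos)
  have dA1: "real dA \<ge> 1" using lam1 by (cases dA) auto
  have "s2.Sfin \<le> sqrt s2.Zr * real dA" by (rule s2.Sfin_bound)
  also have "\<dots> \<le> real dA * real dA"
  proof -
    have "sqrt s2.Zr \<le> sqrt (real dA)" using s2.Zbound by (simp add: s2.Zr_def)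
    also have "\<dots> \<le> real dA"
    proof -
      have "real dA \<le> real dA * real dA" using dA1 by simp
      then have "sqrt (real dA) \<le> sqrt (real dA * real dA)" by (rule real_sqrt_le_mono)
      then show ?thesis by simp
    qed
    finally show ?thesis using dA1 by (intro mult_right_mono) auto
  qed
  finally have "ln s2.Sfin \<le> ln (real dA * real dA)" using Sp by simp
  then have lnb: "ln s2.Sfin \<le> 2 * ln (real dA)" using dA1 by (simp add: ln_mult)
  show ?thesis
    unfolding Let_def Md Zd sd Td petz_renyi_def using supp tr lnb by simp
qed

end
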